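(* Let $k$ be a field, $V$ a finite dimensional $k$-vector space with basis $\{x_1,\dots,x_n\}$, and $F=\{f_i:V^{\otimes n_i}\to V^{\otimes m_i}\}_{i\in I}$ a family of linear maps ($n_i,m_i\in\mathbb{N}_0$). Let $A$ be a bialgebra and suppose $V$ is a left $A$-comodule with structure map $\rho_A:V\to A\otimes V$ such that every $f_i$ is $A$-colinear (where $V^{\otimes \ell}$ carries the tensor product comodule structure induced by the multiplication of $A$, and $V^{\otimes 0}=k$ the trivial comodule). Then there exists a unique bialgebra morphism $\pi:A(F)\to A$ such that $(\pi\otimes \mathrm{id}_V)\circ\rho=\rho_A$, where $\rho:V\to A(F)\otimes V$, $\rho(x_i)=\sum_j t_i^j\otimes x_j$.
   Context: $C$ is the coalgebra with basis $\{t_i^j\}_{i,j=1}^n$, $\Delta(t_i^j)=\sum_k t_i^k\otimes t_k^j$, $\epsilon(t_i^j)=\delta_i^j$; $TC$ is its tensor algebra with the induced bialgebra structure. For $I\in\{1,\dots,n\}^\ell$ write $x_I=x_{i_1}\otimes\cdots\otimes x_{i_\ell}$ and $t_I^J=t_{i_1}^{j_1}\cdots t_{i_\ell}^{j_\ell}$. For a linear map $f:V^{\otimes p}\to V^{\otimes q}$ with $f(x_I)=\sum_J f_I^Jx_J$, $\mathcal{I}_f$ is the two-sided ideal of $TC$ generated by the elements $\sum_{J} t_I^J f_J^K-\sum_J f_I^J t_J^K$ for all $I\in\{1,\dots,n\}^p$, $K\in\{1,\dots,n\}^q$ (first sum over $J\in\{1,\dots,n\}^p$, second over $J\in\{1,\dots,n\}^q$).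 Each $\mathcal{I}_f$ is a bi-ideal, and $A(F):=TC/\mathcal{I}_F$ with $\mathcal{I}_F=\sum_{i\in I}\mathcal{I}_{f_i}$ is a bialgebra; $V$ is an $A(F)$-comodule via $\rho(x_i)=\sum_j t_i^j\otimes x_j$ and all $f_i$ are $A(F)$-colinear. *)

theory Defs
  imports Main "HOL-Library.Poly_Mapping"
begin

text \<open>Tensor products A (x) A and A (x) A (x) A are realised in the standard way as the
  free k-vector space on pairs (triples) of carrier elements, modulo the subspace
  generated by the (multi)linearity relations.  Hence the comultiplication returns a
  representative in the free vector space, and all coalgebra axioms are stated up to
  this tensor equivalence.\<close>

declare [[typedef_overloaded]]

record ('k, 'a) bialg =
  b_carrier :: "'a set"
  b_zero :: 'a
  b_add :: "'a \<Rightarrow> 'a \<Rightarrow> 'a"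
  b_smult :: "'k \<Rightarrow> 'a \<Rightarrow> 'a"
  b_mult :: "'a \<Rightarrow> 'a \<Rightarrow> 'a"
  b_one :: 'a
  b_comult :: "'a \<Rightarrow> ('a \<times> 'a) \<Rightarrow>\<^sub>0 'k"
  b_counit :: "'a \<Rightarrow> 'k"

definition pm_smult :: "'k::comm_ring_1 \<Rightarrow> ('x \<Rightarrow>\<^sub>0 'k) \<Rightarrow> ('x \<Rightarrow>\<^sub>0 'k)" where
  "pm_smult c u = Poly_Mapping.map ((*) c) u"

definition vsum :: "('k, 'a, 'm) bialg_scheme \<Rightarrow> ('x \<Rightarrow> 'a) \<Rightarrow> 'x set \<Rightarrow> 'a" where
  "vsum A f S = Finite_Set.fold (\<lambda>x acc. b_add A (f x) acc) (b_zero A) S"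

inductive_set tnull2 :: "('k::field, 'a, 'm) bialg_scheme \<Rightarrow> (('a \<times> 'a) \<Rightarrow>\<^sub>0 'k) set"
  for A where
  z: "0 \<in> tnull2 A"
| add: "u \<in> tnull2 A \<Longrightarrow> v \<in> tnull2 A \<Longrightarrow> u + v \<in> tnull2 A"
| sm: "u \<in> tnull2 A \<Longrightarrow> pm_smult c u \<in> tnull2 A"
| ladd: "a \<in> b_carrier A \<Longrightarrow> a' \<in> b_carrier A \<Longrightarrow> b \<in> b_carrier A \<Longrightarrow>
     Poly_Mapping.single (b_add A a a', b) 1 - Poly_Mapping.single (a, b) 1
       - Poly_Mapping.single (a', b) 1 \<in> tnull2 A"
| radd: "a \<in> b_carrier A \<Longrightarrow> b \<in> b_carrier A \<Longrightarrow> b' \<in> b_carrier A \<Longrightarrow>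
     Poly_Mapping.single (a, b_add A b b') 1 - Poly_Mapping.single (a, b) 1
       - Poly_Mapping.single (a, b') 1 \<in> tnull2 A"
| lsm: "a \<in> b_carrier A \<Longrightarrow> b \<in> b_carrier A \<Longrightarrow>
     Poly_Mapping.single (b_smult A c a, b) 1 - Poly_Mapping.single (a, b) c \<in> tnull2 A"
| rsm: "a \<in> b_carrier A \<Longrightarrow> b \<in> b_carrier A \<Longrightarrow>
     Poly_Mapping.single (a, b_smult A c b) 1 - Poly_Mapping.single (a, b) c \<in> tnull2 A"

inductive_set tnull3 :: "('k::field, 'a, 'm) bialg_scheme \<Rightarrow> (('a \<times> 'a \<times> 'a) \<Rightarrow>\<^sub>0 'k) set"
  for A where
  z: "0 \<in> tnull3 A"
| add: "u \<in> tnull3 A \<Longrightarrow> v \<in> tnull3 A \<Longrightarrow> u + v \<in> tnull3 A"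
| sm: "u \<in> tnull3 A \<Longrightarrow> pm_smult c u \<in> tnull3 A"
| add1: "a \<in> b_carrier A \<Longrightarrow> a' \<in> b_carrier A \<Longrightarrow> b \<in> b_carrier A \<Longrightarrow> d \<in> b_carrier A \<Longrightarrow>
     Poly_Mapping.single (b_add A a a', b, d) 1 - Poly_Mapping.single (a, b, d) 1
       - Poly_Mapping.single (a', b, d) 1 \<in> tnull3 A"
| add2: "a \<in> b_carrier A \<Longrightarrow> b \<in> b_carrier A \<Longrightarrow> b' \<in> b_carrier A \<Longrightarrow> d \<in> b_carrier A \<Longrightarrow>
     Poly_Mapping.single (a, b_add A b b', d) 1 - Poly_Mapping.single (a, b, d) 1
       - Poly_Mapping.single (a, b', d) 1 \<in> tnull3 A"
| add3: "a \<in> b_carrier A \<Longrightarrow> b \<in> b_carrier A \<Longrightarrow> d \<in> b_carrier A \<Longrightarrow> d' \<in> b_carrier A \<Longrightarrow>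
     Poly_Mapping.single (a, b, b_add A d d') 1 - Poly_Mapping.single (a, b, d) 1
       - Poly_Mapping.single (a, b, d') 1 \<in> tnull3 A"
| sm1: "a \<in> b_carrier A \<Longrightarrow> b \<in> b_carrier A \<Longrightarrow> d \<in> b_carrier A \<Longrightarrow>
     Poly_Mapping.single (b_smult A c a, b, d) 1 - Poly_Mapping.single (a, b, d) c \<in> tnull3 A"
| sm2: "a \<in> b_carrier A \<Longrightarrow> b \<in> b_carrier A \<Longrightarrow> d \<in> b_carrier A \<Longrightarrow>
     Poly_Mapping.single (a, b_smult A c b, d) 1 - Poly_Mapping.single (a, b, d) c \<in> tnull3 A"
| sm3: "a \<in> b_carrier A \<Longrightarrow> b \<in> b_carrier A \<Longrightarrow> d \<in> b_carrier A \<Longrightarrow>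
     Poly_Mapping.single (a, b, b_smult A c d) 1 - Poly_Mapping.single (a, b, d) c \<in> tnull3 A"

definition teq2 :: "('k::field, 'a, 'm) bialg_scheme \<Rightarrow> (('a \<times> 'a) \<Rightarrow>\<^sub>0 'k) \<Rightarrow> (('a \<times> 'a) \<Rightarrow>\<^sub>0 'k) \<Rightarrow> bool" where
  "teq2 A u v \<longleftrightarrow> u - v \<in> tnull2 A"

definition teq3 :: "('k::field, 'a, 'm) bialg_scheme \<Rightarrow> (('a \<times> 'a \<times> 'a) \<Rightarrow>\<^sub>0 'k) \<Rightarrow> (('a \<times> 'a \<times> 'a) \<Rightarrow>\<^sub>0 'k) \<Rightarrow> bool" where
  "teq3 A u v \<longleftrightarrow> u - v \<in> tnull3 A"

definition tmap2 :: "('a \<Rightarrow> 'c) \<Rightarrow> ('b \<Rightarrow> 'd) \<Rightarrow> (('a \<times> 'b) \<Rightarrow>\<^sub>0 'k::comm_monoid_add) \<Rightarrow> (('c \<times> 'd) \<Rightarrow>\<^sub>0 'k)" where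
  "tmap2 f g u = (\<Sum>p\<in>Poly_Mapping.keys u. Poly_Mapping.single (f (fst p), g (snd p)) (Poly_Mapping.lookup u p))"

definition tmult :: "('k::field, 'a, 'm) bialg_scheme \<Rightarrow> (('a \<times> 'a) \<Rightarrow>\<^sub>0 'k) \<Rightarrow> (('a \<times> 'a) \<Rightarrow>\<^sub>0 'k) \<Rightarrow> (('a \<times> 'a) \<Rightarrow>\<^sub>0 'k)" where
  "tmult A u v = (\<Sum>p\<in>Poly_Mapping.keys u. \<Sum>q\<in>Poly_Mapping.keys v.
      Poly_Mapping.single (b_mult A (fst p) (fst q), b_mult A (snd p) (snd q)) (Poly_Mapping.lookup u p * Poly_Mapping.lookup v q))"

definition coassL :: "('k::field, 'a, 'm) bialg_scheme \<Rightarrow> 'a \<Rightarrow> (('a \<times> 'a \<times> 'a) \<Rightarrow>\<^sub>0 'k)" where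
  "coassL A x = (\<Sum>p\<in>Poly_Mapping.keys (b_comult A x). \<Sum>q\<in>Poly_Mapping.keys (b_comult A (fst p)).
      Poly_Mapping.single (fst q, snd q, snd p) (Poly_Mapping.lookup (b_comult A x) p * Poly_Mapping.lookup (b_comult A (fst p)) q))"

definition coassR :: "('k::field, 'a, 'm) bialg_scheme \<Rightarrow> 'a \<Rightarrow> (('a \<times> 'a \<times> 'a) \<Rightarrow>\<^sub>0 'k)" where
  "coassR A x = (\<Sum>p\<in>Poly_Mapping.keys (b_comult A x). \<Sum>q\<in>Poly_Mapping.keys (b_comult A (snd p)).
      Poly_Mapping.single (fst p, fst q, snd q) (Poly_Mapping.lookup (b_comult A x) p * Poly_Mapping.lookup (b_comult A (snd p)) q))"

definition is_bialgebra :: "('k::field, 'a, 'm) bialg_scheme \<Rightarrow> bool" where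
  "is_bialgebra A \<longleftrightarrow>
    (let C = b_carrier A; add = b_add A; sm = b_smult A; mul = b_mult A;
         D = b_comult A; e = b_counit A in
     \<comment> \<open>vector space\<close>
     b_zero A \<in> C \<and>
     (\<forall>x\<in>C. \<forall>y\<in>C. add x y \<in> C) \<and>
     (\<forall>c. \<forall>x\<in>C. sm c x \<in> C) \<and>
     (\<forall>x\<in>C. \<forall>y\<in>C. \<forall>z\<in>C. add (add x y) z = add x (add y z)) \<and>
     (\<forall>x\<in>C. \<forall>y\<in>C. add x y = add y x) \<and>
     (\<forall>x\<in>C. add (b_zero A) x = x) \<and>
     (\<forall>x\<in>C. add x (sm (-1) x) = b_zero A) \<and>
     (\<forall>c. \<forall>x\<in>C. \<forall>y\<in>C. sm c (add x y) = add (sm c x) (sm c y)) \<and>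
     (\<forall>c d. \<forall>x\<in>C. sm (c + d) x = add (sm c x) (sm d x)) \<and>
     (\<forall>c d. \<forall>x\<in>C. sm c (sm d x) = sm (c * d) x) \<and>
     (\<forall>x\<in>C. sm 1 x = x) \<and>
     \<comment> \<open>associative unital algebra\<close>
     b_one A \<in> C \<and>
     (\<forall>x\<in>C. \<forall>y\<in>C. mul x y \<in> C) \<and>
     (\<forall>x\<in>C. \<forall>y\<in>C. \<forall>z\<in>C. mul (mul x y) z = mul x (mul y z)) \<and>
     (\<forall>x\<in>C. mul (b_one A) x = x \<and> mul x (b_one A) = x) \<and>
     (\<forall>x\<in>C. \<forall>y\<in>C. \<forall>z\<in>C. mul x (add y z) = add (mul x y) (mul x z)) \<and>
     (\<forall>x\<in>C. \<forall>y\<in>C. \<forall>z\<in>C. mul (add x y) z = add (mul x z) (mul y z)) \<and>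
     (\<forall>c. \<forall>x\<in>C. \<forall>y\<in>C. sm c (mul x y) = mul (sm c x) y \<and> sm c (mul x y) = mul x (sm c y)) \<and>
     \<comment> \<open>coalgebra\<close>
     (\<forall>x\<in>C. Poly_Mapping.keys (D x) \<subseteq> C \<times> C) \<and>
     (\<forall>x\<in>C. \<forall>y\<in>C. teq2 A (D (add x y)) (D x + D y)) \<and>
     (\<forall>c. \<forall>x\<in>C. teq2 A (D (sm c x)) (pm_smult c (D x))) \<and>
     (\<forall>x\<in>C. \<forall>y\<in>C. e (add x y) = e x + e y) \<and>
     (\<forall>c. \<forall>x\<in>C. e (sm c x) = c * e x) \<and>
     (\<forall>x\<in>C. teq3 A (coassL A x) (coassR A x)) \<and>
     (\<forall>x\<in>C. vsum A (\<lambda>p. sm (e (fst p) * Poly_Mapping.lookup (D x) p) (snd p)) (Poly_Mapping.keys (D x)) = x) \<and>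
     (\<forall>x\<in>C. vsum A (\<lambda>p. sm (e (snd p) * Poly_Mapping.lookup (D x) p) (fst p)) (Poly_Mapping.keys (D x)) = x) \<and>
     \<comment> \<open>compatibility: Delta and epsilon are algebra maps\<close>
     (\<forall>x\<in>C. \<forall>y\<in>C. teq2 A (D (mul x y)) (tmult A (D x) (D y))) \<and>
     teq2 A (D (b_one A)) (Poly_Mapping.single (b_one A, b_one A) 1) \<and>
     (\<forall>x\<in>C. \<forall>y\<in>C. e (mul x y) = e x * e y) \<and>
     e (b_one A) = 1)"

definition bialg_hom :: "('k::field, 'b, 'm) bialg_scheme \<Rightarrow> ('k, 'a, 'n) bialg_scheme \<Rightarrow> ('b \<Rightarrow> 'a) \<Rightarrow> bool" where
  "bialg_hom B A \<pi> \<longleftrightarrow>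
    (\<forall>x\<in>b_carrier B. \<pi> x \<in> b_carrier A) \<and>
    (\<forall>x\<in>b_carrier B. \<forall>y\<in>b_carrier B. \<pi> (b_add B x y) = b_add A (\<pi> x) (\<pi> y)) \<and>
    (\<forall>c. \<forall>x\<in>b_carrier B. \<pi> (b_smult B c x) = b_smult A c (\<pi> x)) \<and>
    (\<forall>x\<in>b_carrier B. \<forall>y\<in>b_carrier B. \<pi> (b_mult B x y) = b_mult A (\<pi> x) (\<pi> y)) \<and>
    \<pi> (b_one B) = b_one A \<and>
    (\<forall>x\<in>b_carrier B. teq2 A (b_comult A (\<pi> x)) (tmap2 \<pi> \<pi> (b_comult B x))) \<and>
    (\<forall>x\<in>b_carrier B. b_counit A (\<pi> x) = b_counit B x)"

text \<open>Multi-indices of length l; they index the basis x_I of V^(x)l.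
  A linear map f : V^(x)p \<rightarrow> V^(x)q is given by its matrix: f(x_I) = sum_J f I J x_J.\<close>
definition idx :: "nat \<Rightarrow> nat \<Rightarrow> nat list set" where
  "idx n l = {I. length I = l \<and> set I \<subseteq> {..<n}}"

definition aprod :: "('k, 'a, 'm) bialg_scheme \<Rightarrow> (nat \<Rightarrow> nat \<Rightarrow> 'a) \<Rightarrow> nat list \<Rightarrow> nat list \<Rightarrow> 'a" where
  "aprod A a I J = foldr (\<lambda>ij acc. b_mult A (a (fst ij) (snd ij)) acc) (zip I J) (b_one A)"

text \<open>A left A-comodule structure rho_A(x_i) = sum_j a i j (x) x_j on V: coassociativity
  and counitality written in the basis x_j.\<close>
definition comodule_mat :: "('k::field, 'a, 'm) bialg_scheme \<Rightarrow> nat \<Rightarrow> (nat \<Rightarrow> nat \<Rightarrow> 'a) \<Rightarrow> bool" where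
  "comodule_mat A n a \<longleftrightarrow>
    (\<forall>i<n. \<forall>j<n. a i j \<in> b_carrier A) \<and>
    (\<forall>i<n. \<forall>j<n. teq2 A (b_comult A (a i j)) (\<Sum>k<n. Poly_Mapping.single (a i k, a k j) 1)) \<and>
    (\<forall>i<n. \<forall>j<n. b_counit A (a i j) = (if i = j then 1 else 0))"

text \<open>f : V^(x)p \<rightarrow> V^(x)q is A-colinear for the tensor product comodule structures
  rho(x_I) = sum_J a_I^J (x) x_J, i.e. (id (x) f) o rho = rho o f, in coordinates.\<close>
definition colinear :: "('k::field, 'a, 'm) bialg_scheme \<Rightarrow> nat \<Rightarrow> (nat \<Rightarrow> nat \<Rightarrow> 'a) \<Rightarrow> nat \<Rightarrow> nat \<Rightarrow> (nat list \<Rightarrow> nat list \<Rightarrow> 'k) \<Rightarrow> bool" where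
  "colinear A n a p q f \<longleftrightarrow>
    (\<forall>I\<in>idx n p. \<forall>K\<in>idx n q.
       vsum A (\<lambda>J. b_smult A (f J K) (aprod A a I J)) (idx n p)
     = vsum A (\<lambda>J. b_smult A (f I J) (aprod A a J K)) (idx n q))"

text \<open>TC = free algebra on the generators t_i^j (i,j < n): noncommutative polynomials,
  i.e. finitely supported functions on words of generators (i,j).\<close>
type_synonym 'k tc = "(nat \<times> nat) list \<Rightarrow>\<^sub>0 'k"

definition tc_carrier :: "nat \<Rightarrow> 'k::field tc set" where
  "tc_carrier n = {p. \<forall>w\<in>Poly_Mapping.keys p. \<forall>ij\<in>set w. fst ij < n \<and> snd ij < n}"

definition tc_mul :: "'k::field tc \<Rightarrow> 'k tc \<Rightarrow> 'k tc" where
  "tc_mul p q = (\<Sum>u\<in>Poly_Mapping.keys p. \<Sum>w\<in>Poly_Mapping.keys q. Poly_Mapping.single (u @ w) (Poly_Mapping.lookup p u * Poly_Mapping.lookup q w))"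

definition tc_one :: "'k::field tc" where
  "tc_one = Poly_Mapping.single [] 1"

definition tword :: "nat list \<Rightarrow> nat list \<Rightarrow> 'k::field tc" where
  "tword I J = Poly_Mapping.single (zip I J) 1"

text \<open>Induced bialgebra structure: Delta(t_i^j) = sum_k t_i^k (x) t_k^j, eps(t_i^j) = delta_i^j,
  extended multiplicatively and linearly.\<close>
definition tc_comult :: "nat \<Rightarrow> 'k::field tc \<Rightarrow> ('k tc \<times> 'k tc) \<Rightarrow>\<^sub>0 'k" where
  "tc_comult n p = (\<Sum>w\<in>Poly_Mapping.keys p. \<Sum>ks\<in>idx n (length w).
      Poly_Mapping.single (tword (map fst w) ks, tword ks (map snd w)) (Poly_Mapping.lookup p w))"

definition tc_counit :: "'k::field tc \<Rightarrow> 'k" where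
  "tc_counit p = (\<Sum>w\<in>Poly_Mapping.keys p. if (\<forall>ij\<in>set w. fst ij = snd ij) then Poly_Mapping.lookup p w else 0)"

definition ideal_gen :: "nat \<Rightarrow> nat \<Rightarrow> nat \<Rightarrow> (nat list \<Rightarrow> nat list \<Rightarrow> 'k::field) \<Rightarrow> nat list \<Rightarrow> nat list \<Rightarrow> 'k tc" where
  "ideal_gen n p q f I K =
     (\<Sum>J\<in>idx n p. pm_smult (f J K) (tword I J)) - (\<Sum>J\<in>idx n q. pm_smult (f I J) (tword J K))"

inductive_set tc_ideal :: "nat \<Rightarrow> 'k::field tc set \<Rightarrow> 'k tc set" for n G where
  gen: "g \<in> G \<Longrightarrow> g \<in> tc_ideal n G"
| z: "0 \<in> tc_ideal n G"
| add: "u \<in> tc_ideal n G \<Longrightarrow> v \<in> tc_ideal n G \<Longrightarrow> u + v \<in> tc_ideal n G"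
| sm: "u \<in> tc_ideal n G \<Longrightarrow> pm_smult c u \<in> tc_ideal n G"
| lmul: "x \<in> tc_carrier n \<Longrightarrow> u \<in> tc_ideal n G \<Longrightarrow> tc_mul x u \<in> tc_ideal n G"
| rmul: "x \<in> tc_carrier n \<Longrightarrow> u \<in> tc_ideal n G \<Longrightarrow> tc_mul u x \<in> tc_ideal n G"

text \<open>I_F = sum of the I_{f_i}, i.e. the ideal generated by all generators of all f_i.
  The family F is given by arities nin i, mout i and matrices fm i.\<close>
definition IF :: "nat \<Rightarrow> ('i \<Rightarrow> nat) \<Rightarrow> ('i \<Rightarrow> nat) \<Rightarrow> ('i \<Rightarrow> nat list \<Rightarrow> nat list \<Rightarrow> 'k::field) \<Rightarrow> 'k tc set" where
  "IF n nin mout fm = tc_ideal n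
     {ideal_gen n (nin i) (mout i) (fm i) I K | i I K. I \<in> idx n (nin i) \<and> K \<in> idx n (mout i)}"

definition coset :: "'k::field tc set \<Rightarrow> 'k tc \<Rightarrow> 'k tc set" where
  "coset R p = {p + r | r. r \<in> R}"

definition rep :: "'k::field tc set \<Rightarrow> 'k tc" where
  "rep X = (SOME p. p \<in> X)"

definition AF :: "nat \<Rightarrow> ('i \<Rightarrow> nat) \<Rightarrow> ('i \<Rightarrow> nat) \<Rightarrow> ('i \<Rightarrow> nat list \<Rightarrow> nat list \<Rightarrow> 'k::field)
                  \<Rightarrow> ('k, 'k tc set) bialg" where
  "AF n nin mout fm =
    (let R = IF n nin mout fm in
     \<lparr> b_carrier = {coset R p | p. p \<in> tc_carrier n},
       b_zero = coset R 0,
       b_add = (\<lambda>X Y. coset R (rep X + rep Y)),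
       b_smult = (\<lambda>c X. coset R (pm_smult c (rep X))),
       b_mult = (\<lambda>X Y. coset R (tc_mul (rep X) (rep Y))),
       b_one = coset R tc_one,
       b_comult = (\<lambda>X. tmap2 (coset R) (coset R) (tc_comult n (rep X))),
       b_counit = (\<lambda>X. tc_counit (rep X)) \<rparr>)"

definition AF_t :: "nat \<Rightarrow> ('i \<Rightarrow> nat) \<Rightarrow> ('i \<Rightarrow> nat) \<Rightarrow> ('i \<Rightarrow> nat list \<Rightarrow> nat list \<Rightarrow> 'k::field)
                  \<Rightarrow> nat \<Rightarrow> nat \<Rightarrow> 'k tc set" where
  "AF_t n nin mout fm i j = coset (IF n nin mout fm) (tword [i] [j])"

end

theory Submission
  imports Defs
begin

lemma lookup_pm_smult [simp]: "Poly_Mapping.lookup (pm_smult c u) k = c * Poly_Mapping.lookup u k"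
  unfolding pm_smult_def by (simp add: Poly_Mapping.map.rep_eq when_def)

lemma keys_pm_smult: "Poly_Mapping.keys (pm_smult c u) \<subseteq> Poly_Mapping.keys u"
  by (auto simp: in_keys_iff)

lemma pm_smult_add: "pm_smult c (u + v) = pm_smult c u + pm_smult c v"
  by (rule poly_mapping_eqI) (simp add: lookup_add distrib_left)

lemma pm_smult_add2: "pm_smult (c + d) u = pm_smult c u + pm_smult d u"
  by (rule poly_mapping_eqI) (simp add: lookup_add distrib_right)

lemma pm_smult_sum: "pm_smult c (\<Sum>x\<in>S. f x) = (\<Sum>x\<in>S. pm_smult c (f x))"
  by (rule poly_mapping_eqI) (simp add: lookup_sum sum_distrib_left)

lemma pm_smult_single: "pm_smult c (Poly_Mapping.single k d) = Poly_Mapping.single k (c * d)"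
  by (rule poly_mapping_eqI) (simp add: lookup_single when_def)

lemma pm_smult_m1: "pm_smult (-1) u = - u"
  by (rule poly_mapping_eqI) simp

lemma pm_smult_0 [simp]: "pm_smult 0 u = 0"
  by (rule poly_mapping_eqI) simp

lemma pm_smult_zero [simp]: "pm_smult c 0 = 0"
  by (rule poly_mapping_eqI) simp

lemma pm_smult_1 [simp]: "pm_smult 1 u = u"
  by (rule poly_mapping_eqI) simp

lemma pm_smult_smult: "pm_smult c (pm_smult d u) = pm_smult (c * d) u"
  by (rule poly_mapping_eqI) (simp add: mult.assoc)

lemma pm_smult_diff: "pm_smult c (u - v) = pm_smult c u - pm_smult c v"
  by (rule poly_mapping_eqI) (simp add: lookup_minus right_diff_distrib)

lemma pm_expand: "u = (\<Sum>k\<in>Poly_Mapping.keys u. Poly_Mapping.single k (Poly_Mapping.lookup u k))"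
proof (rule poly_mapping_eqI)
  fix k'
  show "Poly_Mapping.lookup u k' = Poly_Mapping.lookup (\<Sum>k\<in>Poly_Mapping.keys u. Poly_Mapping.single k (Poly_Mapping.lookup u k)) k'"
    by (simp add: lookup_sum lookup_single when_def in_keys_iff)
qed

lemma tmap2_superset:
  assumes "finite S" "Poly_Mapping.keys u \<subseteq> S"
  shows "tmap2 f g u = (\<Sum>p\<in>S. Poly_Mapping.single (f (fst p), g (snd p)) (Poly_Mapping.lookup u p))"
  unfolding tmap2_def
  by (rule sum.mono_neutral_left[OF assms]) (auto simp: in_keys_iff)

lemma tmap2_add: "tmap2 f g (u + v) = tmap2 f g u + tmap2 f g v"
proof -
  let ?S = "Poly_Mapping.keys u \<union> Poly_Mapping.keys v"
  have f: "finite ?S" by simp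
  show ?thesis
    using keys_add[of u v]
    by (simp add: tmap2_superset[OF f] lookup_add single_add sum.distrib)
qed

lemma tmap2_zero [simp]: "tmap2 f g 0 = 0"
  by (simp add: tmap2_def)

lemma tmap2_sum: "tmap2 f g (\<Sum>x\<in>S. h x) = (\<Sum>x\<in>S. tmap2 f g (h x))"
  by (induction S rule: infinite_finite_induct) (auto simp: tmap2_add)

lemma tmap2_single: "tmap2 f g (Poly_Mapping.single p c) = Poly_Mapping.single (f (fst p), g (snd p)) c"
  by (simp add: tmap2_def)

lemma tmap2_comp: "tmap2 f g (tmap2 f' g' u) = tmap2 (f \<circ> f') (g \<circ> g') u"
  by (simp add: tmap2_def[of f' g'] tmap2_sum tmap2_single) (simp add: tmap2_def)

lemma tmap2_cong:
  assumes "\<And>p. p \<in> Poly_Mapping.keys u \<Longrightarrow> f (fst p) = f' (fst p) \<and> g (snd p) = g' (snd p)"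
  shows "tmap2 f g u = tmap2 f' g' u"
  unfolding tmap2_def using assms by (intro sum.cong) auto

definition bil :: "('p \<Rightarrow> 'q \<Rightarrow> 'r) \<Rightarrow> ('p \<Rightarrow>\<^sub>0 'k::comm_ring_1) \<Rightarrow> ('q \<Rightarrow>\<^sub>0 'k) \<Rightarrow> ('r \<Rightarrow>\<^sub>0 'k)" where
  "bil h u v = (\<Sum>p\<in>Poly_Mapping.keys u. \<Sum>q\<in>Poly_Mapping.keys v.
      Poly_Mapping.single (h p q) (Poly_Mapping.lookup u p * Poly_Mapping.lookup v q))"

lemma tc_mul_bil: "tc_mul = bil (@)"
  by (intro ext) (simp add: tc_mul_def bil_def)

lemma tmult_bil: "tmult A = bil (\<lambda>p q. (b_mult A (fst p) (fst q), b_mult A (snd p) (snd q)))"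
  by (intro ext) (simp add: tmult_def bil_def)

lemma bil_superset:
  assumes "finite S" "Poly_Mapping.keys u \<subseteq> S" "finite T" "Poly_Mapping.keys v \<subseteq> T"
  shows "bil h u v = (\<Sum>p\<in>S. \<Sum>q\<in>T. Poly_Mapping.single (h p q) (Poly_Mapping.lookup u p * Poly_Mapping.lookup v q))"
proof -
  have "bil h u v = (\<Sum>p\<in>Poly_Mapping.keys u. \<Sum>q\<in>T. Poly_Mapping.single (h p q) (Poly_Mapping.lookup u p * Poly_Mapping.lookup v q))"
    unfolding bil_def
    by (intro sum.cong refl sum.mono_neutral_left[OF assms(3,4)]) (auto simp: in_keys_iff)
  also have "\<dots> = (\<Sum>p\<in>S. \<Sum>q\<in>T. Poly_Mapping.single (h p q) (Poly_Mapping.lookup u p * Poly_Mapping.lookup v q))"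
    by (intro sum.mono_neutral_left[OF assms(1,2)]) (auto simp: in_keys_iff)
  finally show ?thesis .
qed

lemma bil_add_left: "bil h (u1 + u2) v = bil h u1 v + bil h u2 v"
proof -
  let ?S = "Poly_Mapping.keys u1 \<union> Poly_Mapping.keys u2"
  have f: "finite ?S" "finite (Poly_Mapping.keys v)" by simp_all
  show ?thesis
    using keys_add[of u1 u2]
    by (simp add: bil_superset[OF f(1) _ f(2)] lookup_add distrib_right single_add sum.distrib)
qed

lemma bil_add_right: "bil h u (v1 + v2) = bil h u v1 + bil h u v2"
proof -
  let ?S = "Poly_Mapping.keys v1 \<union> Poly_Mapping.keys v2"
  have f: "finite ?S" "finite (Poly_Mapping.keys u)" by simp_all
  show ?thesis
    using keys_add[of v1 v2]
    by (simp add: bil_superset[OF f(2) _ f(1)] lookup_add distrib_left single_add sum.distrib)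
qed

lemma bil_zero_left [simp]: "bil h 0 v = 0" by (simp add: bil_def)
lemma bil_zero_right [simp]: "bil h u 0 = 0" by (simp add: bil_def)

lemma bil_smult_left: "bil h (pm_smult c u) v = pm_smult c (bil h u v)"
proof -
  have f: "finite (Poly_Mapping.keys u)" "finite (Poly_Mapping.keys v)" by simp_all
  show ?thesis
    using keys_pm_smult[of c u]
    by (simp add: bil_superset[OF f(1) _ f(2)] pm_smult_sum pm_smult_single mult.assoc)
qed

lemma bil_smult_right: "bil h u (pm_smult c v) = pm_smult c (bil h u v)"
proof -
  have f: "finite (Poly_Mapping.keys u)" "finite (Poly_Mapping.keys v)" by simp_all
  show ?thesis
    using keys_pm_smult[of c v]
    by (simp add: bil_superset[OF f(1) _ f(2)] pm_smult_sum pm_smult_single mult.left_commute)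
qed

lemma bil_single: "bil h (Poly_Mapping.single p c) (Poly_Mapping.single q d) = Poly_Mapping.single (h p q) (c * d)"
  by (simp add: bil_def)

lemma bil_sum_left: "bil h (\<Sum>x\<in>S. f x) v = (\<Sum>x\<in>S. bil h (f x) v)"
  by (induction S rule: infinite_finite_induct) (auto simp: bil_add_left)

lemma bil_sum_right: "bil h u (\<Sum>x\<in>S. f x) = (\<Sum>x\<in>S. bil h u (f x))"
  by (induction S rule: infinite_finite_induct) (auto simp: bil_add_right)

lemma bil_minus_left: "bil h (- u) v = - bil h u v"
  using bil_smult_left[of h "-1" u v] by (simp add: pm_smult_m1)

lemma bil_minus_right: "bil h u (- v) = - bil h u v"
  using bil_smult_right[of h u "-1" v] by (simp add: pm_smult_m1)

lemma bil_diff_left: "bil h (u1 - u2) v = bil h u1 v - bil h u2 v"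
  using bil_add_left[of h u1 "- u2" v] by (simp add: bil_minus_left)

lemma bil_diff_right: "bil h u (v1 - v2) = bil h u v1 - bil h u v2"
  using bil_add_right[of h u v1 "- v2"] by (simp add: bil_minus_right)

lemma keys_bil: "Poly_Mapping.keys (bil h u v) \<subseteq> {h p q | p q. p \<in> Poly_Mapping.keys u \<and> q \<in> Poly_Mapping.keys v}"
  unfolding bil_def
  by (rule order.trans[OF keys_sum]) (auto dest!: keys_sum[THEN subsetD] split: if_splits; blast)

lemma tmap2_smult: "tmap2 f g (pm_smult c u) = pm_smult c (tmap2 f g u)"
proof -
  have f: "finite (Poly_Mapping.keys u)" by simp
  show ?thesis
    using keys_pm_smult[of c u]
    by (simp add: tmap2_superset[OF f] pm_smult_sum pm_smult_single)
qed

lemma keys_tmap2: "Poly_Mapping.keys (tmap2 f g u) \<subseteq> {(f (fst p), g (snd p)) | p. p \<in> Poly_Mapping.keys u}"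
  unfolding tmap2_def
  by (rule order.trans[OF keys_sum]) (auto split: if_splits; blast)



locale BA =
  fixes A :: "('k::field, 'a) bialg"
  assumes bialg: "is_bialgebra A"
begin

abbreviation "CC \<equiv> b_carrier A"
abbreviation "pl \<equiv> b_add A"
abbreviation "sm \<equiv> b_smult A"
abbreviation "mu \<equiv> b_mult A"
abbreviation "ze \<equiv> b_zero A"
abbreviation "on \<equiv> b_one A"
abbreviation "DD \<equiv> b_comult A"
abbreviation "ee \<equiv> b_counit A"

lemmas ax = bialg[unfolded is_bialgebra_def Let_def]

lemma ze_C [simp]: "ze \<in> CC" using ax[THEN conjunct1] by auto
lemma pl_C [simp]: "x \<in> CC \<Longrightarrow> y \<in> CC \<Longrightarrow> pl x y \<in> CC" using ax[THEN conjunct2, THEN conjunct1] by auto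
lemma sm_C [simp]: "x \<in> CC \<Longrightarrow> sm c x \<in> CC" using ax[THEN conjunct2, THEN conjunct2, THEN conjunct1] by auto
lemma pl_assoc: "x \<in> CC \<Longrightarrow> y \<in> CC \<Longrightarrow> z \<in> CC \<Longrightarrow> pl (pl x y) z = pl x (pl y z)" using ax[THEN conjunct2, THEN conjunct2, THEN conjunct2, THEN conjunct1] by auto
lemma pl_comm: "x \<in> CC \<Longrightarrow> y \<in> CC \<Longrightarrow> pl x y = pl y x" using ax[THEN conjunct2, THEN conjunct2, THEN conjunct2, THEN conjunct2, THEN conjunct1] by auto
lemma pl_ze [simp]: "x \<in> CC \<Longrightarrow> pl ze x = x" using ax[THEN conjunct2, THEN conjunct2, THEN conjunct2, THEN conjunct2, THEN conjunct2, THEN conjunct1] by auto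
lemma pl_neg: "x \<in> CC \<Longrightarrow> pl x (sm (-1) x) = ze" using ax[THEN conjunct2, THEN conjunct2, THEN conjunct2, THEN conjunct2, THEN conjunct2, THEN conjunct2, THEN conjunct1] by auto
lemma sm_pl: "x \<in> CC \<Longrightarrow> y \<in> CC \<Longrightarrow> sm c (pl x y) = pl (sm c x) (sm c y)" using ax[THEN conjunct2, THEN conjunct2, THEN conjunct2, THEN conjunct2, THEN conjunct2, THEN conjunct2, THEN conjunct2, THEN conjunct1] by auto
lemma sm_add: "x \<in> CC \<Longrightarrow> sm (c + d) x = pl (sm c x) (sm d x)" using ax[THEN conjunct2, THEN conjunct2, THEN conjunct2, THEN conjunct2, THEN conjunct2, THEN conjunct2, THEN conjunct2, THEN conjunct2, THEN conjunct1] by auto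
lemma sm_sm: "x \<in> CC \<Longrightarrow> sm c (sm d x) = sm (c * d) x" using ax[THEN conjunct2, THEN conjunct2, THEN conjunct2, THEN conjunct2, THEN conjunct2, THEN conjunct2, THEN conjunct2, THEN conjunct2, THEN conjunct2, THEN conjunct1] by auto
lemma sm_1 [simp]: "x \<in> CC \<Longrightarrow> sm 1 x = x" using ax[THEN conjunct2, THEN conjunct2, THEN conjunct2, THEN conjunct2, THEN conjunct2, THEN conjunct2, THEN conjunct2, THEN conjunct2, THEN conjunct2, THEN conjunct2, THEN conjunct1] by auto
lemma on_C [simp]: "on \<in> CC" using ax[THEN conjunct2, THEN conjunct2, THEN conjunct2, THEN conjunct2, THEN conjunct2, THEN conjunct2, THEN conjunct2, THEN conjunct2, THEN conjunct2, THEN conjunct2, THEN conjunct2, THEN conjunct1] by auto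
lemma mu_C [simp]: "x \<in> CC \<Longrightarrow> y \<in> CC \<Longrightarrow> mu x y \<in> CC" using ax[THEN conjunct2, THEN conjunct2, THEN conjunct2, THEN conjunct2, THEN conjunct2, THEN conjunct2, THEN conjunct2, THEN conjunct2, THEN conjunct2, THEN conjunct2, THEN conjunct2, THEN conjunct2, THEN conjunct1] by auto
lemma mu_assoc: "x \<in> CC \<Longrightarrow> y \<in> CC \<Longrightarrow> z \<in> CC \<Longrightarrow> mu (mu x y) z = mu x (mu y z)" using ax[THEN conjunct2, THEN conjunct2, THEN conjunct2, THEN conjunct2, THEN conjunct2, THEN conjunct2, THEN conjunct2, THEN conjunct2, THEN conjunct2, THEN conjunct2, THEN conjunct2, THEN conjunct2, THEN conjunct2, THEN conjunct1] by auto
lemma mu_on [simp]: "x \<in> CC \<Longrightarrow> mu on x = x" "x \<in> CC \<Longrightarrow> mu x on = x" using ax[THEN conjunct2, THEN conjunct2, THEN conjunct2, THEN conjunct2, THEN conjunct2, THEN conjunct2, THEN conjunct2, THEN conjunct2, THEN conjunct2, THEN conjunct2, THEN conjunct2, THEN conjunct2, THEN conjunct2, THEN conjunct2, THEN conjunct1] by auto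
lemma mu_pl_r: "x \<in> CC \<Longrightarrow> y \<in> CC \<Longrightarrow> z \<in> CC \<Longrightarrow> mu x (pl y z) = pl (mu x y) (mu x z)" using ax[THEN conjunct2, THEN conjunct2, THEN conjunct2, THEN conjunct2, THEN conjunct2, THEN conjunct2, THEN conjunct2, THEN conjunct2, THEN conjunct2, THEN conjunct2, THEN conjunct2, THEN conjunct2, THEN conjunct2, THEN conjunct2, THEN conjunct2, THEN conjunct1] by auto
lemma mu_pl_l: "x \<in> CC \<Longrightarrow> y \<in> CC \<Longrightarrow> z \<in> CC \<Longrightarrow> mu (pl x y) z = pl (mu x z) (mu y z)" using ax[THEN conjunct2, THEN conjunct2, THEN conjunct2, THEN conjunct2, THEN conjunct2, THEN conjunct2, THEN conjunct2, THEN conjunct2, THEN conjunct2, THEN conjunct2, THEN conjunct2, THEN conjunct2, THEN conjunct2, THEN conjunct2, THEN conjunct2, THEN conjunct2, THEN conjunct1] by auto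
lemma sm_mu_l: "x \<in> CC \<Longrightarrow> y \<in> CC \<Longrightarrow> mu (sm c x) y = sm c (mu x y)" using ax[THEN conjunct2, THEN conjunct2, THEN conjunct2, THEN conjunct2, THEN conjunct2, THEN conjunct2, THEN conjunct2, THEN conjunct2, THEN conjunct2, THEN conjunct2, THEN conjunct2, THEN conjunct2, THEN conjunct2, THEN conjunct2, THEN conjunct2, THEN conjunct2, THEN conjunct2, THEN conjunct1] by auto
lemma sm_mu_r: "x \<in> CC \<Longrightarrow> y \<in> CC \<Longrightarrow> mu x (sm c y) = sm c (mu x y)" using ax[THEN conjunct2, THEN conjunct2, THEN conjunct2, THEN conjunct2, THEN conjunct2, THEN conjunct2, THEN conjunct2, THEN conjunct2, THEN conjunct2, THEN conjunct2, THEN conjunct2, THEN conjunct2, THEN conjunct2, THEN conjunct2, THEN conjunct2, THEN conjunct2, THEN conjunct2, THEN conjunct1] by metis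
lemma DD_keys: "x \<in> CC \<Longrightarrow> Poly_Mapping.keys (DD x) \<subseteq> CC \<times> CC" using ax[THEN conjunct2, THEN conjunct2, THEN conjunct2, THEN conjunct2, THEN conjunct2, THEN conjunct2, THEN conjunct2, THEN conjunct2, THEN conjunct2, THEN conjunct2, THEN conjunct2, THEN conjunct2, THEN conjunct2, THEN conjunct2, THEN conjunct2, THEN conjunct2, THEN conjunct2, THEN conjunct2, THEN conjunct1] by auto
lemma DD_pl: "x \<in> CC \<Longrightarrow> y \<in> CC \<Longrightarrow> teq2 A (DD (pl x y)) (DD x + DD y)" using ax[THEN conjunct2, THEN conjunct2, THEN conjunct2, THEN conjunct2, THEN conjunct2, THEN conjunct2, THEN conjunct2, THEN conjunct2, THEN conjunct2, THEN conjunct2, THEN conjunct2, THEN conjunct2, THEN conjunct2, THEN conjunct2, THEN conjunct2, THEN conjunct2, THEN conjunct2, THEN conjunct2, THEN conjunct2, THEN conjunct1] by auto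
lemma DD_sm: "x \<in> CC \<Longrightarrow> teq2 A (DD (sm c x)) (pm_smult c (DD x))" using ax[THEN conjunct2, THEN conjunct2, THEN conjunct2, THEN conjunct2, THEN conjunct2, THEN conjunct2, THEN conjunct2, THEN conjunct2, THEN conjunct2, THEN conjunct2, THEN conjunct2, THEN conjunct2, THEN conjunct2, THEN conjunct2, THEN conjunct2, THEN conjunct2, THEN conjunct2, THEN conjunct2, THEN conjunct2, THEN conjunct2, THEN conjunct1] by auto
lemma ee_pl: "x \<in> CC \<Longrightarrow> y \<in> CC \<Longrightarrow> ee (pl x y) = ee x + ee y" using ax[THEN conjunct2, THEN conjunct2, THEN conjunct2, THEN conjunct2, THEN conjunct2, THEN conjunct2, THEN conjunct2, THEN conjunct2, THEN conjunct2, THEN conjunct2, THEN conjunct2, THEN conjunct2, THEN conjunct2, THEN conjunct2, THEN conjunct2, THEN conjunct2, THEN conjunct2, THEN conjunct2, THEN conjunct2, THEN conjunct2, THEN conjunct2, THEN conjunct1] by auto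
lemma ee_sm: "x \<in> CC \<Longrightarrow> ee (sm c x) = c * ee x" using ax[THEN conjunct2, THEN conjunct2, THEN conjunct2, THEN conjunct2, THEN conjunct2, THEN conjunct2, THEN conjunct2, THEN conjunct2, THEN conjunct2, THEN conjunct2, THEN conjunct2, THEN conjunct2, THEN conjunct2, THEN conjunct2, THEN conjunct2, THEN conjunct2, THEN conjunct2, THEN conjunct2, THEN conjunct2, THEN conjunct2, THEN conjunct2, THEN conjunct2, THEN conjunct1] by auto
lemma DD_mu: "x \<in> CC \<Longrightarrow> y \<in> CC \<Longrightarrow> teq2 A (DD (mu x y)) (tmult A (DD x) (DD y))" using ax[THEN conjunct2, THEN conjunct2, THEN conjunct2, THEN conjunct2, THEN conjunct2, THEN conjunct2, THEN conjunct2, THEN conjunct2, THEN conjunct2, THEN conjunct2, THEN conjunct2, THEN conjunct2, THEN conjunct2, THEN conjunct2, THEN conjunct2, THEN conjunct2, THEN conjunct2, THEN conjunct2, THEN conjunct2, THEN conjunct2, THEN conjunct2, THEN conjunct2, THEN conjunct2, THEN conjunct2, THEN conjunct2, THEN conjunct2, THEN conjunct1] by auto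
lemma DD_on: "teq2 A (DD on) (Poly_Mapping.single (on, on) 1)" using ax[THEN conjunct2, THEN conjunct2, THEN conjunct2, THEN conjunct2, THEN conjunct2, THEN conjunct2, THEN conjunct2, THEN conjunct2, THEN conjunct2, THEN conjunct2, THEN conjunct2, THEN conjunct2, THEN conjunct2, THEN conjunct2, THEN conjunct2, THEN conjunct2, THEN conjunct2, THEN conjunct2, THEN conjunct2, THEN conjunct2, THEN conjunct2, THEN conjunct2, THEN conjunct2, THEN conjunct2, THEN conjunct2, THEN conjunct2, THEN conjunct2, THEN conjunct1] by auto
lemma ee_mu: "x \<in> CC \<Longrightarrow> y \<in> CC \<Longrightarrow> ee (mu x y) = ee x * ee y" using ax[THEN conjunct2, THEN conjunct2, THEN conjunct2, THEN conjunct2, THEN conjunct2, THEN conjunct2, THEN conjunct2, THEN conjunct2, THEN conjunct2, THEN conjunct2, THEN conjunct2, THEN conjunct2, THEN conjunct2, THEN conjunct2, THEN conjunct2, THEN conjunct2, THEN conjunct2, THEN conjunct2, THEN conjunct2, THEN conjunct2, THEN conjunct2, THEN conjunct2, THEN conjunct2, THEN conjunct2, THEN conjunct2, THEN conjunct2, THEN conjunct2, THEN conjunct2, THEN conjunct1] by auto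
lemma ee_on: "ee on = 1" using ax[THEN conjunct2, THEN conjunct2, THEN conjunct2, THEN conjunct2, THEN conjunct2, THEN conjunct2, THEN conjunct2, THEN conjunct2, THEN conjunct2, THEN conjunct2, THEN conjunct2, THEN conjunct2, THEN conjunct2, THEN conjunct2, THEN conjunct2, THEN conjunct2, THEN conjunct2, THEN conjunct2, THEN conjunct2, THEN conjunct2, THEN conjunct2, THEN conjunct2, THEN conjunct2, THEN conjunct2, THEN conjunct2, THEN conjunct2, THEN conjunct2, THEN conjunct2, THEN conjunct2] by auto

lemma pl_ze_r [simp]: "x \<in> CC \<Longrightarrow> pl x ze = x"
  using pl_comm[of x ze] by simp

lemma pl_negl: "x \<in> CC \<Longrightarrow> pl (sm (-1) x) x = ze"
  using pl_comm[of x "sm (-1) x"] pl_neg[of x] by simp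

lemma cancel_aux: "x \<in> CC \<Longrightarrow> y \<in> CC \<Longrightarrow> pl (sm (-1) x) (pl x y) = y"
  using pl_assoc[of "sm (-1) x" x y] pl_negl[of x] by simp

lemma pl_cancel:
  assumes "x \<in> CC" "y \<in> CC" "z \<in> CC" "pl x y = pl x z" shows "y = z"
  using cancel_aux[of x y] cancel_aux[of x z] assms by metis

lemma sm_0 [simp]: "x \<in> CC \<Longrightarrow> sm 0 x = ze"
proof -
  assume x: "x \<in> CC"
  have "pl (sm 0 x) (sm 0 x) = pl (sm 0 x) ze"
    using sm_add[OF x, of 0 0] x by simp
  then show ?thesis using pl_cancel x by (metis pl_ze_r sm_C ze_C)
qed

lemma sm_ze [simp]: "sm c ze = ze"
  using sm_sm[of ze c 0] by simp

lemma mu_ze [simp]: "x \<in> CC \<Longrightarrow> mu x ze = ze" "x \<in> CC \<Longrightarrow> mu ze x = ze"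
  using sm_mu_r[of x ze 0] sm_mu_l[of ze x 0] by simp_all

lemma ee_ze [simp]: "ee ze = 0"
  using ee_sm[of ze 0] by simp

definition projC where "projC y = (if y \<in> CC then y else ze)"

lemma vsum_eq_fold:
  assumes "\<And>x. x \<in> S \<Longrightarrow> g x \<in> CC"
  shows "vsum A g S = Finite_Set.fold (\<lambda>x y. pl (g x) (projC y)) ze S"
proof -
  have "fold_graph (\<lambda>x y. pl (g x) y) ze S = fold_graph (\<lambda>x y. pl (g x) (projC y)) ze S"
    by (rule fold_graph_closed_eq[where B = CC]) (auto simp: projC_def assms)
  then show ?thesis unfolding vsum_def Finite_Set.fold_def by simp
qed

lemma vsum_cong:
  assumes "\<And>x. x \<in> S \<Longrightarrow> g x = h x"
  shows "vsum A g S = vsum A h S"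
proof -
  have "fold_graph (\<lambda>x y. pl (g x) y) ze S = fold_graph (\<lambda>x y. pl (h x) y) ze S"
    by (rule fold_graph_closed_eq[where B = UNIV]) (auto simp: assms)
  then show ?thesis unfolding vsum_def Finite_Set.fold_def by simp
qed

lemma vsum_empty [simp]: "vsum A g {} = ze"
  by (simp add: vsum_def)

lemma cfc: "comp_fun_commute_on {x. g x \<in> CC} (\<lambda>x y. pl (g x) (projC y))"
proof
  fix x y assume xy: "x \<in> {x. g x \<in> CC}" "y \<in> {x. g x \<in> CC}"
  show "(\<lambda>ya. pl (g y) (projC ya)) \<circ> (\<lambda>y. pl (g x) (projC y)) = (\<lambda>y. pl (g x) (projC y)) \<circ> (\<lambda>ya. pl (g y) (projC ya))"
  proof
    fix z
    have pz: "projC z \<in> CC" by (simp add: projC_def)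
    show "((\<lambda>ya. pl (g y) (projC ya)) \<circ> (\<lambda>y. pl (g x) (projC y))) z = ((\<lambda>y. pl (g x) (projC y)) \<circ> (\<lambda>ya. pl (g y) (projC ya))) z"
      using xy pz by (simp add: projC_def pl_assoc[symmetric] pl_comm[of "g x" "g y"])
  qed
qed

lemma vsum_insert:
  assumes "finite S" "x \<notin> S" "g x \<in> CC" "\<And>y. y \<in> S \<Longrightarrow> g y \<in> CC"
  shows "vsum A g (insert x S) = pl (g x) (vsum A g S)"
proof -
  have "vsum A g (insert x S) = Finite_Set.fold (\<lambda>x y. pl (g x) (projC y)) ze (insert x S)"
    using assms by (intro vsum_eq_fold) auto
  also have "\<dots> = pl (g x) (projC (Finite_Set.fold (\<lambda>x y. pl (g x) (projC y)) ze S))"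
    using comp_fun_commute_on.fold_insert[OF cfc, of x S g] assms by auto
  also have "Finite_Set.fold (\<lambda>x y. pl (g x) (projC y)) ze S = vsum A g S"
    using assms by (intro vsum_eq_fold[symmetric]) auto
  also have "projC (vsum A g S) = vsum A g S"
  proof (cases "S = {}")
    case False
    then obtain s S' where "S = insert s S'" "s \<notin> S'" by (meson Set.set_insert ex_in_conv)
    then have "Finite_Set.fold (\<lambda>x y. pl (g x) (projC y)) ze S = pl (g s) (projC (Finite_Set.fold (\<lambda>x y. pl (g x) (projC y)) ze S'))"
      using comp_fun_commute_on.fold_insert[OF cfc, of s S' g] assms by auto
    moreover have "projC z \<in> CC" for z by (simp add: projC_def)
    ultimately have "Finite_Set.fold (\<lambda>x y. pl (g x) (projC y)) ze S \<in> CC"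
      using assms \<open>S = insert s S'\<close> by simp
    then show ?thesis using vsum_eq_fold[of S g] assms by (simp add: projC_def)
  qed (simp add: projC_def)
  finally show ?thesis .
qed

lemma vsum_C: "(\<And>x. x \<in> S \<Longrightarrow> g x \<in> CC) \<Longrightarrow> vsum A g S \<in> CC"
proof (induction S rule: infinite_finite_induct)
  case (infinite S) then show ?case by (simp add: vsum_def)
next
  case (insert x F) then show ?case by (simp add: vsum_insert)
qed simp

lemma vsum_pl:
  assumes "\<And>x. x \<in> S \<Longrightarrow> g x \<in> CC" "\<And>x. x \<in> S \<Longrightarrow> h x \<in> CC" "finite S"
  shows "vsum A (\<lambda>x. pl (g x) (h x)) S = pl (vsum A g S) (vsum A h S)"
  using assms(3,1,2)
proof (induction S rule: finite_induct)
  case (insert x F)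
  have C: "vsum A g F \<in> CC" "vsum A h F \<in> CC" using insert by (auto intro: vsum_C)
  have "vsum A (\<lambda>x. pl (g x) (h x)) (insert x F) = pl (pl (g x) (h x)) (pl (vsum A g F) (vsum A h F))"
    using insert by (simp add: vsum_insert)
  also have "\<dots> = pl (pl (g x) (vsum A g F)) (pl (h x) (vsum A h F))"
    using C insert.prems
    by (simp add: pl_assoc pl_assoc[symmetric, of "h x"] pl_comm[of "h x" "vsum A g F"])
  finally show ?case using insert by (simp add: vsum_insert)
qed simp

lemma vsum_sm:
  assumes "\<And>x. x \<in> S \<Longrightarrow> g x \<in> CC" "finite S"
  shows "vsum A (\<lambda>x. sm c (g x)) S = sm c (vsum A g S)"
  using assms(2,1)
proof (induction S rule: finite_induct)
  case (insert x F)
  then show ?case by (simp add: vsum_insert sm_pl vsum_C)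
qed simp

lemma vsum_mu_l:
  assumes "\<And>x. x \<in> S \<Longrightarrow> g x \<in> CC" "finite S" "y \<in> CC"
  shows "vsum A (\<lambda>x. mu y (g x)) S = mu y (vsum A g S)"
  using assms(2,1)
proof (induction S rule: finite_induct)
  case (insert x F)
  then show ?case using assms(3) by (simp add: vsum_insert mu_pl_r vsum_C)
qed (simp add: assms)

lemma vsum_mu_r:
  assumes "\<And>x. x \<in> S \<Longrightarrow> g x \<in> CC" "finite S" "y \<in> CC"
  shows "vsum A (\<lambda>x. mu (g x) y) S = mu (vsum A g S) y"
  using assms(2,1)
proof (induction S rule: finite_induct)
  case (insert x F)
  then show ?case using assms(3) by (simp add: vsum_insert mu_pl_l vsum_C)
qed (simp add: assms)

lemma vsum_zero_ext:
  assumes "finite T" "finite U" "T \<inter> U = {}" "\<And>x. x \<in> T \<Longrightarrow> g x \<in> CC" "\<And>x. x \<in> U \<Longrightarrow> g x = ze"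
  shows "vsum A g (T \<union> U) = vsum A g T"
  using assms(2,3,5)
proof (induction U rule: finite_induct)
  case (insert x F)
  have "vsum A g (T \<union> insert x F) = vsum A g (insert x (T \<union> F))" by simp
  also have "\<dots> = pl (g x) (vsum A g (T \<union> F))"
    using insert assms by (intro vsum_insert) auto
  finally show ?case using insert assms by (simp add: vsum_C)
qed simp

lemma vsum_superset:
  assumes "finite S" "T \<subseteq> S" "\<And>x. x \<in> S \<Longrightarrow> g x \<in> CC" "\<And>x. x \<in> S - T \<Longrightarrow> g x = ze"
  shows "vsum A g S = vsum A g T"
proof -
  have "S = T \<union> (S - T)" using assms by auto
  then show ?thesis using vsum_zero_ext[of T "S - T" g] assms
    by (metis Diff_disjoint finite_Diff finite_subset subsetD)
qed

lemma ee_vsum: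
  assumes "\<And>x. x \<in> S \<Longrightarrow> g x \<in> CC" "finite S"
  shows "ee (vsum A g S) = (\<Sum>x\<in>S. ee (g x))"
  using assms(2,1)
  by (induction S rule: finite_induct) (simp_all add: vsum_insert ee_pl vsum_C)

end



context BA
begin

lemma tn_neg: "u \<in> tnull2 A \<Longrightarrow> - u \<in> tnull2 A"
  using tnull2.sm[of u A "-1"] by (simp add: pm_smult_m1)

lemma tn_diff: "u \<in> tnull2 A \<Longrightarrow> v \<in> tnull2 A \<Longrightarrow> u - v \<in> tnull2 A"
  using tnull2.add[OF _ tn_neg[of v], of u] by simp

lemma tn_sum: "(\<And>x. x \<in> S \<Longrightarrow> f x \<in> tnull2 A) \<Longrightarrow> (\<Sum>x\<in>S. f x) \<in> tnull2 A"
  by (induction S rule: infinite_finite_induct) (auto intro: tnull2.intros)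

lemma teq_refl [simp]: "teq2 A u u"
  by (simp add: teq2_def tnull2.z)

lemma teq_sym: "teq2 A u v \<Longrightarrow> teq2 A v u"
  unfolding teq2_def using tn_neg[of "u - v"] by (simp add: minus_diff_eq)

lemma teq_trans: "teq2 A u v \<Longrightarrow> teq2 A v w \<Longrightarrow> teq2 A u w"
  unfolding teq2_def using tnull2.add[of "u - v" A "v - w"] by simp

lemma teq_add: "teq2 A (u + v) (u' + v')" if "teq2 A u u'" "teq2 A v v'"
proof -
  have "(u + v) - (u' + v') = (u - u') + (v - v')" by (simp add: algebra_simps)
  then show ?thesis using that unfolding teq2_def using tnull2.add[of "u - u'" A "v - v'"] by metis
qed

lemma teq_sm: "teq2 A u u' \<Longrightarrow> teq2 A (pm_smult c u) (pm_smult c u')"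
  unfolding teq2_def using tnull2.sm[of "u - u'" A c] by (simp add: pm_smult_diff)

lemma teq_sum: "(\<And>x. x \<in> S \<Longrightarrow> teq2 A (f x) (g x)) \<Longrightarrow> teq2 A (\<Sum>x\<in>S. f x) (\<Sum>x\<in>S. g x)"
  by (induction S rule: infinite_finite_induct) (auto intro: teq_add)

lemma tmult_expand_right:
  assumes "\<And>q c. q \<in> Poly_Mapping.keys v \<Longrightarrow> tmult A g (Poly_Mapping.single q c) \<in> tnull2 A"
  shows "tmult A g v \<in> tnull2 A"
proof -
  have "tmult A g v = (\<Sum>q\<in>Poly_Mapping.keys v. tmult A g (Poly_Mapping.single q (Poly_Mapping.lookup v q)))"
    using bil_sum_right[of _ g "\<lambda>q. Poly_Mapping.single q (Poly_Mapping.lookup v q)" "Poly_Mapping.keys v"]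
    by (simp only: tmult_bil pm_expand[symmetric])
  then show ?thesis using assms by (simp add: tn_sum)
qed

lemma tmult_expand_left:
  assumes "\<And>q c. q \<in> Poly_Mapping.keys v \<Longrightarrow> tmult A (Poly_Mapping.single q c) g \<in> tnull2 A"
  shows "tmult A v g \<in> tnull2 A"
proof -
  have "tmult A v g = (\<Sum>q\<in>Poly_Mapping.keys v. tmult A (Poly_Mapping.single q (Poly_Mapping.lookup v q)) g)"
    using bil_sum_left[of _ "\<lambda>q. Poly_Mapping.single q (Poly_Mapping.lookup v q)" "Poly_Mapping.keys v" g]
    by (simp only: tmult_bil pm_expand[symmetric])
  then show ?thesis using assms by (simp add: tn_sum)
qed

lemma tmult_null_left:
  assumes "u \<in> tnull2 A" "Poly_Mapping.keys v \<subseteq> CC \<times> CC"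
  shows "tmult A u v \<in> tnull2 A"
  using assms(1)
proof (induction u rule: tnull2.induct)
  case z then show ?case by (simp add: tmult_bil tnull2.z)
next
  case (add u w) then show ?case by (simp add: tmult_bil bil_add_left tnull2.add)
next
  case (sm u c) then show ?case by (simp add: tmult_bil bil_smult_left tnull2.sm)
next
  case (ladd a a' b)
  show ?case
  proof (rule tmult_expand_right)
    fix q c assume q: "q \<in> Poly_Mapping.keys v"
    then have q1: "fst q \<in> CC" "snd q \<in> CC" using assms(2) by auto
    have "tmult A (Poly_Mapping.single (pl a a', b) 1 - Poly_Mapping.single (a, b) 1 - Poly_Mapping.single (a', b) 1) (Poly_Mapping.single q c)
      = pm_smult c (Poly_Mapping.single (pl (mu a (fst q)) (mu a' (fst q)), mu b (snd q)) 1 - Poly_Mapping.single (mu a (fst q), mu b (snd q)) 1 - Poly_Mapping.single (mu a' (fst q), mu b (snd q)) 1)"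
      using ladd q1 by (simp add: tmult_bil bil_diff_left bil_single pm_smult_diff pm_smult_single mu_pl_l)
    then show "tmult A (Poly_Mapping.single (pl a a', b) 1 - Poly_Mapping.single (a, b) 1 - Poly_Mapping.single (a', b) 1) (Poly_Mapping.single q c) \<in> tnull2 A"
      using ladd q1 by (simp add: tnull2.sm tnull2.ladd)
  qed
next
  case (radd a b b')
  show ?case
  proof (rule tmult_expand_right)
    fix q c assume q: "q \<in> Poly_Mapping.keys v"
    then have q1: "fst q \<in> CC" "snd q \<in> CC" using assms(2) by auto
    have "tmult A (Poly_Mapping.single (a, pl b b') 1 - Poly_Mapping.single (a, b) 1 - Poly_Mapping.single (a, b') 1) (Poly_Mapping.single q c)
      = pm_smult c (Poly_Mapping.single (mu a (fst q), pl (mu b (snd q)) (mu b' (snd q))) 1 - Poly_Mapping.single (mu a (fst q), mu b (snd q)) 1 - Poly_Mapping.single (mu a (fst q), mu b' (snd q)) 1)"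
      using radd q1 by (simp add: tmult_bil bil_diff_left bil_single pm_smult_diff pm_smult_single mu_pl_l)
    then show "tmult A (Poly_Mapping.single (a, pl b b') 1 - Poly_Mapping.single (a, b) 1 - Poly_Mapping.single (a, b') 1) (Poly_Mapping.single q c) \<in> tnull2 A"
      using radd q1 by (simp add: tnull2.sm tnull2.radd)
  qed
next
  case (lsm a b d)
  show ?case
  proof (rule tmult_expand_right)
    fix q c assume q: "q \<in> Poly_Mapping.keys v"
    then have q1: "fst q \<in> CC" "snd q \<in> CC" using assms(2) by auto
    have "tmult A (Poly_Mapping.single (sm d a, b) 1 - Poly_Mapping.single (a, b) d) (Poly_Mapping.single q c)
      = pm_smult c (Poly_Mapping.single (sm d (mu a (fst q)), mu b (snd q)) 1 - Poly_Mapping.single (mu a (fst q), mu b (snd q)) d)"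
      using lsm q1 by (simp add: tmult_bil bil_diff_left bil_single pm_smult_diff pm_smult_single sm_mu_l mult.commute)
    then show "tmult A (Poly_Mapping.single (sm d a, b) 1 - Poly_Mapping.single (a, b) d) (Poly_Mapping.single q c) \<in> tnull2 A"
      using lsm q1 by (simp add: tnull2.sm tnull2.lsm)
  qed
next
  case (rsm a b d)
  show ?case
  proof (rule tmult_expand_right)
    fix q c assume q: "q \<in> Poly_Mapping.keys v"
    then have q1: "fst q \<in> CC" "snd q \<in> CC" using assms(2) by auto
    have "tmult A (Poly_Mapping.single (a, sm d b) 1 - Poly_Mapping.single (a, b) d) (Poly_Mapping.single q c)
      = pm_smult c (Poly_Mapping.single (mu a (fst q), sm d (mu b (snd q))) 1 - Poly_Mapping.single (mu a (fst q), mu b (snd q)) d)"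
      using rsm q1 by (simp add: tmult_bil bil_diff_left bil_single pm_smult_diff pm_smult_single sm_mu_l mult.commute)
    then show "tmult A (Poly_Mapping.single (a, sm d b) 1 - Poly_Mapping.single (a, b) d) (Poly_Mapping.single q c) \<in> tnull2 A"
      using rsm q1 by (simp add: tnull2.sm tnull2.rsm)
  qed
qed

lemma tmult_null_right:
  assumes "v \<in> tnull2 A" "Poly_Mapping.keys u \<subseteq> CC \<times> CC"
  shows "tmult A u v \<in> tnull2 A"
  using assms(1)
proof (induction v rule: tnull2.induct)
  case z then show ?case by (simp add: tmult_bil tnull2.z)
next
  case (add u w) then show ?case by (simp add: tmult_bil bil_add_right tnull2.add)
next
  case (sm u c) then show ?case by (simp add: tmult_bil bil_smult_right tnull2.sm)
next
  case (ladd a a' b)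
  show ?case
  proof (rule tmult_expand_left)
    fix q c assume q: "q \<in> Poly_Mapping.keys u"
    then have q1: "fst q \<in> CC" "snd q \<in> CC" using assms(2) by auto
    have "tmult A (Poly_Mapping.single q c) (Poly_Mapping.single (pl a a', b) 1 - Poly_Mapping.single (a, b) 1 - Poly_Mapping.single (a', b) 1)
      = pm_smult c (Poly_Mapping.single (pl (mu (fst q) a) (mu (fst q) a'), mu (snd q) b) 1 - Poly_Mapping.single (mu (fst q) a, mu (snd q) b) 1 - Poly_Mapping.single (mu (fst q) a', mu (snd q) b) 1)"
      using ladd q1 by (simp add: tmult_bil bil_diff_right bil_single pm_smult_diff pm_smult_single mu_pl_r)
    then show "tmult A (Poly_Mapping.single q c) (Poly_Mapping.single (pl a a', b) 1 - Poly_Mapping.single (a, b) 1 - Poly_Mapping.single (a', b) 1) \<in> tnull2 A"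
      using ladd q1 by (simp add: tnull2.sm tnull2.ladd)
  qed
next
  case (radd a b b')
  show ?case
  proof (rule tmult_expand_left)
    fix q c assume q: "q \<in> Poly_Mapping.keys u"
    then have q1: "fst q \<in> CC" "snd q \<in> CC" using assms(2) by auto
    have "tmult A (Poly_Mapping.single q c) (Poly_Mapping.single (a, pl b b') 1 - Poly_Mapping.single (a, b) 1 - Poly_Mapping.single (a, b') 1)
      = pm_smult c (Poly_Mapping.single (mu (fst q) a, pl (mu (snd q) b) (mu (snd q) b')) 1 - Poly_Mapping.single (mu (fst q) a, mu (snd q) b) 1 - Poly_Mapping.single (mu (fst q) a, mu (snd q) b') 1)"
      using radd q1 by (simp add: tmult_bil bil_diff_right bil_single pm_smult_diff pm_smult_single mu_pl_r)
    then show "tmult A (Poly_Mapping.single q c) (Poly_Mapping.single (a, pl b b') 1 - Poly_Mapping.single (a, b) 1 - Poly_Mapping.single (a, b') 1) \<in> tnull2 A"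
      using radd q1 by (simp add: tnull2.sm tnull2.radd)
  qed
next
  case (lsm a b d)
  show ?case
  proof (rule tmult_expand_left)
    fix q c assume q: "q \<in> Poly_Mapping.keys u"
    then have q1: "fst q \<in> CC" "snd q \<in> CC" using assms(2) by auto
    have "tmult A (Poly_Mapping.single q c) (Poly_Mapping.single (sm d a, b) 1 - Poly_Mapping.single (a, b) d)
      = pm_smult c (Poly_Mapping.single (sm d (mu (fst q) a), mu (snd q) b) 1 - Poly_Mapping.single (mu (fst q) a, mu (snd q) b) d)"
      using lsm q1 by (simp add: tmult_bil bil_diff_right bil_single pm_smult_diff pm_smult_single sm_mu_r mult.commute)
    then show "tmult A (Poly_Mapping.single q c) (Poly_Mapping.single (sm d a, b) 1 - Poly_Mapping.single (a, b) d) \<in> tnull2 A"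
      using lsm q1 by (simp add: tnull2.sm tnull2.lsm)
  qed
next
  case (rsm a b d)
  show ?case
  proof (rule tmult_expand_left)
    fix q c assume q: "q \<in> Poly_Mapping.keys u"
    then have q1: "fst q \<in> CC" "snd q \<in> CC" using assms(2) by auto
    have "tmult A (Poly_Mapping.single q c) (Poly_Mapping.single (a, sm d b) 1 - Poly_Mapping.single (a, b) d)
      = pm_smult c (Poly_Mapping.single (mu (fst q) a, sm d (mu (snd q) b)) 1 - Poly_Mapping.single (mu (fst q) a, mu (snd q) b) d)"
      using rsm q1 by (simp add: tmult_bil bil_diff_right bil_single pm_smult_diff pm_smult_single sm_mu_r mult.commute)
    then show "tmult A (Poly_Mapping.single q c) (Poly_Mapping.single (a, sm d b) 1 - Poly_Mapping.single (a, b) d) \<in> tnull2 A"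
      using rsm q1 by (simp add: tnull2.sm tnull2.rsm)
  qed
qed

lemma teq_tmult:
  assumes "teq2 A u u'" "teq2 A v v'" "Poly_Mapping.keys u' \<subseteq> CC \<times> CC" "Poly_Mapping.keys v \<subseteq> CC \<times> CC"
  shows "teq2 A (tmult A u v) (tmult A u' v')"
proof -
  have "tmult A u v - tmult A u' v' = tmult A (u - u') v + tmult A u' (v - v')"
    by (simp add: tmult_bil bil_diff_left bil_diff_right)
  moreover have "tmult A (u - u') v \<in> tnull2 A" using assms tmult_null_left unfolding teq2_def by blast
  moreover have "tmult A u' (v - v') \<in> tnull2 A" using assms tmult_null_right unfolding teq2_def by blast
  ultimately show ?thesis unfolding teq2_def by (simp add: tnull2.add)
qed

lemma DD_ze: "teq2 A (DD ze) 0"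
  using DD_sm[of ze 0] by simp

lemma DD_vsum:
  assumes "\<And>x. x \<in> S \<Longrightarrow> g x \<in> CC" "finite S"
  shows "teq2 A (DD (vsum A g S)) (\<Sum>x\<in>S. DD (g x))"
  using assms(2,1)
proof (induction S rule: finite_induct)
  case empty then show ?case by (simp add: DD_ze)
next
  case (insert x F)
  have 1: "teq2 A (DD (vsum A g (insert x F))) (DD (g x) + DD (vsum A g F))"
    using insert by (simp add: vsum_insert DD_pl vsum_C)
  have 2: "teq2 A (DD (g x) + DD (vsum A g F)) (DD (g x) + (\<Sum>x\<in>F. DD (g x)))"
    using insert by (intro teq_add) auto
  show ?case using teq_trans[OF 1 2] insert by simp
qed

end



definition weval :: "('k, 'a, 'm) bialg_scheme \<Rightarrow> (nat \<Rightarrow> nat \<Rightarrow> 'a) \<Rightarrow> (nat \<times> nat) list \<Rightarrow> 'a" where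
  "weval A a w = foldr (\<lambda>ij acc. b_mult A (a (fst ij) (snd ij)) acc) w (b_one A)"

definition ev :: "('k::field, 'a, 'm) bialg_scheme \<Rightarrow> (nat \<Rightarrow> nat \<Rightarrow> 'a) \<Rightarrow> 'k tc \<Rightarrow> 'a" where
  "ev A a p = vsum A (\<lambda>w. b_smult A (Poly_Mapping.lookup p w) (weval A a w)) (Poly_Mapping.keys p)"

definition wok :: "nat \<Rightarrow> (nat \<times> nat) list \<Rightarrow> bool" where
  "wok n w \<longleftrightarrow> (\<forall>ij\<in>set w. fst ij < n \<and> snd ij < n)"

lemma weval_Nil [simp]: "weval A a [] = b_one A" by (simp add: weval_def)
lemma weval_Cons [simp]: "weval A a ((i, j) # w) = b_mult A (a i j) (weval A a w)" by (simp add: weval_def)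

lemma wok_Nil [simp]: "wok n []" by (simp add: wok_def)
lemma wok_Cons [simp]: "wok n ((i, j) # w) \<longleftrightarrow> i < n \<and> j < n \<and> wok n w" by (simp add: wok_def)
lemma wok_append [simp]: "wok n (u @ w) \<longleftrightarrow> wok n u \<and> wok n w" by (auto simp: wok_def)

lemma tcC_iff: "p \<in> tc_carrier n \<longleftrightarrow> (\<forall>w\<in>Poly_Mapping.keys p. wok n w)"
  by (simp add: tc_carrier_def wok_def)

lemma tcC_add: "p \<in> tc_carrier n \<Longrightarrow> q \<in> tc_carrier n \<Longrightarrow> p + q \<in> tc_carrier n"
  using keys_add[of p q] unfolding tcC_iff by blast

lemma tcC_sm: "p \<in> tc_carrier n \<Longrightarrow> pm_smult c p \<in> tc_carrier n"
  using keys_pm_smult[of c p] unfolding tcC_iff by blast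

lemma tcC_zero [simp]: "0 \<in> tc_carrier n"
  unfolding tcC_iff by simp

lemma tcC_single: "wok n w \<Longrightarrow> Poly_Mapping.single w c \<in> tc_carrier n"
  unfolding tcC_iff by simp

lemma tcC_sum: "(\<And>x. x \<in> S \<Longrightarrow> h x \<in> tc_carrier n) \<Longrightarrow> (\<Sum>x\<in>S. h x) \<in> tc_carrier n"
  by (induction S rule: infinite_finite_induct) (auto intro: tcC_add)

lemma tcC_neg: "p \<in> tc_carrier n \<Longrightarrow> - p \<in> tc_carrier n"
  using tcC_sm[of p n "-1"] by (simp add: pm_smult_m1)

lemma tcC_diff: "p \<in> tc_carrier n \<Longrightarrow> q \<in> tc_carrier n \<Longrightarrow> p - q \<in> tc_carrier n"
  using tcC_add[OF _ tcC_neg[of q], of p] by simp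

lemma tcC_mul: "p \<in> tc_carrier n \<Longrightarrow> q \<in> tc_carrier n \<Longrightarrow> tc_mul p q \<in> tc_carrier n"
  unfolding tc_mul_def by (intro tcC_sum tcC_single) (auto simp: tcC_iff)

lemma tcC_one [simp]: "tc_one \<in> tc_carrier n"
  by (simp add: tc_one_def tcC_single)

lemma idx_finite [simp]: "finite (idx n l)"
proof -
  have "idx n l = {xs. set xs \<subseteq> {..<n} \<and> length xs = l}" by (auto simp: idx_def)
  then show ?thesis using finite_lists_length_eq[of "{..<n}" l] by simp
qed

lemma idx_Suc: "idx n (Suc l) = (\<lambda>(k, ks). k # ks) ` ({..<n} \<times> idx n l)"
proof
  show "idx n (Suc l) \<subseteq> (\<lambda>(k, ks). k # ks) ` ({..<n} \<times> idx n l)"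
  proof
    fix xs assume "xs \<in> idx n (Suc l)"
    then obtain k ks where "xs = k # ks" "k < n" "ks \<in> idx n l"
      by (cases xs) (auto simp: idx_def)
    then show "xs \<in> (\<lambda>(k, ks). k # ks) ` ({..<n} \<times> idx n l)" by force
  qed
qed (auto simp: idx_def)

lemma idx_0 [simp]: "idx n 0 = {[]}" by (auto simp: idx_def)

lemma wok_zip: "set I \<subseteq> {..<n} \<Longrightarrow> set J \<subseteq> {..<n} \<Longrightarrow> wok n (zip I J)"
  by (auto simp: wok_def dest: set_zip_leftD set_zip_rightD)

lemma tword_C: "I \<in> idx n p \<Longrightarrow> J \<in> idx n q \<Longrightarrow> tword I J \<in> tc_carrier n"
  unfolding tword_def idx_def by (intro tcC_single wok_zip) auto

locale BAN = BA A for A :: "('k::field, 'a) bialg" +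
  fixes n :: nat and a :: "nat \<Rightarrow> nat \<Rightarrow> 'a"
  assumes comod: "comodule_mat A n a"
begin

abbreviation "W \<equiv> weval A a"
abbreviation "E \<equiv> ev A a"

lemma aC: "i < n \<Longrightarrow> j < n \<Longrightarrow> a i j \<in> CC"
  using comod by (simp add: comodule_mat_def)

lemma a_DD: "i < n \<Longrightarrow> j < n \<Longrightarrow> teq2 A (DD (a i j)) (\<Sum>k<n. Poly_Mapping.single (a i k, a k j) 1)"
  using comod by (simp add: comodule_mat_def)

lemma a_ee: "i < n \<Longrightarrow> j < n \<Longrightarrow> ee (a i j) = (if i = j then 1 else 0)"
  using comod by (simp add: comodule_mat_def)

lemma W_C: "wok n w \<Longrightarrow> W w \<in> CC"
  by (induction w) (auto simp: aC)

lemma W_append: "wok n u \<Longrightarrow> wok n w \<Longrightarrow> W (u @ w) = mu (W u) (W w)"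
  by (induction u) (auto simp: W_C aC mu_assoc)

lemma E_superset:
  assumes "finite S" "Poly_Mapping.keys p \<subseteq> S" "\<And>w. w \<in> S \<Longrightarrow> wok n w"
  shows "E p = vsum A (\<lambda>w. sm (Poly_Mapping.lookup p w) (W w)) S"
  unfolding ev_def
  by (rule vsum_superset[symmetric]) (use assms in \<open>auto simp: W_C in_keys_iff\<close>)

lemma E_C: "p \<in> tc_carrier n \<Longrightarrow> E p \<in> CC"
  unfolding ev_def by (rule vsum_C) (auto simp: tcC_iff W_C)

lemma E_add:
  assumes "p \<in> tc_carrier n" "q \<in> tc_carrier n"
  shows "E (p + q) = pl (E p) (E q)"
proof -
  let ?S = "Poly_Mapping.keys p \<union> Poly_Mapping.keys q"
  have ok: "\<And>w. w \<in> ?S \<Longrightarrow> wok n w" using assms by (auto simp: tcC_iff)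
  have "E (p + q) = vsum A (\<lambda>w. sm (Poly_Mapping.lookup (p + q) w) (W w)) ?S"
    using keys_add[of p q] ok by (intro E_superset) auto
  also have "\<dots> = vsum A (\<lambda>w. pl (sm (Poly_Mapping.lookup p w) (W w)) (sm (Poly_Mapping.lookup q w) (W w))) ?S"
    using ok by (intro vsum_cong) (simp add: lookup_add sm_add W_C)
  also have "\<dots> = pl (vsum A (\<lambda>w. sm (Poly_Mapping.lookup p w) (W w)) ?S) (vsum A (\<lambda>w. sm (Poly_Mapping.lookup q w) (W w)) ?S)"
    using ok by (intro vsum_pl) (auto simp: W_C)
  also have "\<dots> = pl (E p) (E q)"
  proof -
    have "E p = vsum A (\<lambda>w. sm (Poly_Mapping.lookup p w) (W w)) ?S"
      using ok by (intro E_superset) auto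
    moreover have "E q = vsum A (\<lambda>w. sm (Poly_Mapping.lookup q w) (W w)) ?S"
      using ok by (intro E_superset) auto
    ultimately show ?thesis by simp
  qed
  finally show ?thesis .
qed

lemma E_sm:
  assumes "p \<in> tc_carrier n"
  shows "E (pm_smult c p) = sm c (E p)"
proof -
  have ok: "\<And>w. w \<in> Poly_Mapping.keys p \<Longrightarrow> wok n w" using assms by (auto simp: tcC_iff)
  have "E (pm_smult c p) = vsum A (\<lambda>w. sm (c * Poly_Mapping.lookup p w) (W w)) (Poly_Mapping.keys p)"
    using keys_pm_smult[of c p] ok by (subst E_superset[of "Poly_Mapping.keys p"]) auto
  also have "\<dots> = vsum A (\<lambda>w. sm c (sm (Poly_Mapping.lookup p w) (W w))) (Poly_Mapping.keys p)"
    using ok by (intro vsum_cong) (simp add: sm_sm W_C)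
  also have "\<dots> = sm c (E p)"
    using ok unfolding ev_def by (intro vsum_sm) (auto simp: W_C)
  finally show ?thesis .
qed

lemma E_zero [simp]: "E 0 = ze"
  by (simp add: ev_def)

lemma E_single: "wok n w \<Longrightarrow> E (Poly_Mapping.single w c) = sm c (W w)"
proof (cases "c = 0")
  case False
  assume w: "wok n w"
  have "vsum A (\<lambda>wa. sm (Poly_Mapping.lookup (Poly_Mapping.single w c) wa) (W wa)) (insert w {})
     = pl (sm (Poly_Mapping.lookup (Poly_Mapping.single w c) w) (W w)) (vsum A (\<lambda>wa. sm (Poly_Mapping.lookup (Poly_Mapping.single w c) wa) (W wa)) {})"
    using w by (intro vsum_insert) (auto simp: W_C)
  then show ?thesis using False w by (simp add: ev_def W_C)
qed (simp add: ev_def W_C)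

lemma E_sum:
  assumes "finite S" "\<And>x. x \<in> S \<Longrightarrow> h x \<in> tc_carrier n"
  shows "E (\<Sum>x\<in>S. h x) = vsum A (\<lambda>x. E (h x)) S"
  using assms
proof (induction S rule: finite_induct)
  case (insert x F)
  then show ?case by (simp add: E_add tcC_sum vsum_insert E_C)
qed simp

lemma E_neg: "p \<in> tc_carrier n \<Longrightarrow> E (- p) = sm (-1) (E p)"
  using E_sm[of p "-1"] by (simp add: pm_smult_m1)

lemma E_diff: "p \<in> tc_carrier n \<Longrightarrow> q \<in> tc_carrier n \<Longrightarrow> E (p - q) = pl (E p) (sm (-1) (E q))"
  using E_add[OF _ tcC_neg[of q], of p] E_neg[of q] by simp

lemma E_mul:
  assumes p: "p \<in> tc_carrier n" and q: "q \<in> tc_carrier n"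
  shows "E (tc_mul p q) = mu (E p) (E q)"
proof -
  have okp: "\<And>w. w \<in> Poly_Mapping.keys p \<Longrightarrow> wok n w" using p by (auto simp: tcC_iff)
  have okq: "\<And>w. w \<in> Poly_Mapping.keys q \<Longrightarrow> wok n w" using q by (auto simp: tcC_iff)
  have "E (tc_mul p q) = vsum A (\<lambda>u. E (\<Sum>w\<in>Poly_Mapping.keys q. Poly_Mapping.single (u @ w) (Poly_Mapping.lookup p u * Poly_Mapping.lookup q w))) (Poly_Mapping.keys p)"
    unfolding tc_mul_def using okp okq by (intro E_sum) (auto intro!: tcC_sum tcC_single)
  also have "\<dots> = vsum A (\<lambda>u. vsum A (\<lambda>w. sm (Poly_Mapping.lookup p u * Poly_Mapping.lookup q w) (W (u @ w))) (Poly_Mapping.keys q)) (Poly_Mapping.keys p)"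
    using okp okq by (intro vsum_cong E_sum[THEN trans]) (auto simp: tcC_single E_single intro!: vsum_cong)
  also have "\<dots> = vsum A (\<lambda>u. vsum A (\<lambda>w. mu (sm (Poly_Mapping.lookup p u) (W u)) (sm (Poly_Mapping.lookup q w) (W w))) (Poly_Mapping.keys q)) (Poly_Mapping.keys p)"
    using okp okq by (intro vsum_cong) (simp add: W_append sm_mu_l sm_mu_r sm_sm W_C mult.commute)
  also have "\<dots> = vsum A (\<lambda>u. mu (sm (Poly_Mapping.lookup p u) (W u)) (E q)) (Poly_Mapping.keys p)"
    using okp okq unfolding ev_def[of A a q] by (intro vsum_cong vsum_mu_l) (auto simp: W_C)
  also have "\<dots> = mu (E p) (E q)"
    using okp okq E_C[OF q] unfolding ev_def[of A a p] by (intro vsum_mu_r) (auto simp: W_C)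
  finally show ?thesis .
qed

lemma W_ee: "wok n w \<Longrightarrow> ee (W w) = (if (\<forall>ij\<in>set w. fst ij = snd ij) then 1 else 0)"
proof (induction w)
  case (Cons ij w)
  then show ?case by (cases ij) (auto simp: ee_mu W_C aC a_ee; force)
qed (simp add: ee_on)

lemma E_counit: "p \<in> tc_carrier n \<Longrightarrow> ee (E p) = tc_counit p"
  unfolding ev_def tc_counit_def
  by (subst ee_vsum) (auto simp: tcC_iff W_C ee_sm W_ee intro!: sum.cong)

end



context BAN
begin

definition T :: "(nat \<times> nat) list \<Rightarrow> ('a \<times> 'a) \<Rightarrow>\<^sub>0 'k" where
  "T w = (\<Sum>ks\<in>idx n (length w). Poly_Mapping.single (W (zip (map fst w) ks), W (zip ks (map snd w))) 1)"

lemma wok_fst: "wok n w \<Longrightarrow> set (map fst w) \<subseteq> {..<n}" by (auto simp: wok_def)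
lemma wok_snd: "wok n w \<Longrightarrow> set (map snd w) \<subseteq> {..<n}" by (auto simp: wok_def)

lemma T_keys: "wok n w \<Longrightarrow> Poly_Mapping.keys (T w) \<subseteq> CC \<times> CC"
  unfolding T_def
  by (rule order.trans[OF keys_sum])
     (auto simp: idx_def intro!: W_C wok_zip wok_fst wok_snd split: if_splits)

lemma keys_sum_single_C:
  assumes "\<And>x. x \<in> S \<Longrightarrow> f x \<in> CC \<and> g x \<in> CC"
  shows "Poly_Mapping.keys (\<Sum>x\<in>S. Poly_Mapping.single (f x, g x) c) \<subseteq> CC \<times> CC"
  by (rule order.trans[OF keys_sum]) (auto simp: assms split: if_splits)

lemma DD_W: "wok n w \<Longrightarrow> teq2 A (DD (W w)) (T w)"
proof (induction w)
  case Nil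
  then show ?case by (simp add: T_def DD_on)
next
  case (Cons ij w)
  obtain i j where ij: "ij = (i, j)" by (cases ij)
  have ok: "i < n" "j < n" "wok n w" using Cons.prems ij by auto
  have 1: "teq2 A (DD (W (ij # w))) (tmult A (DD (a i j)) (DD (W w)))"
    using ok ij by (simp add: DD_mu aC W_C)
  have 2: "teq2 A (tmult A (DD (a i j)) (DD (W w))) (tmult A (\<Sum>k<n. Poly_Mapping.single (a i k, a k j) 1) (T w))"
    using ok Cons.IH by (intro teq_tmult a_DD keys_sum_single_C DD_keys W_C) (auto simp: aC)
  have "tmult A (\<Sum>k<n. Poly_Mapping.single (a i k, a k j) 1) (T w)
     = (\<Sum>k<n. \<Sum>ks\<in>idx n (length w). Poly_Mapping.single (mu (a i k) (W (zip (map fst w) ks)), mu (a k j) (W (zip ks (map snd w)))) 1)"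
    unfolding T_def tmult_bil by (simp add: bil_sum_left bil_sum_right bil_single) (rule sum.swap)
  also have "\<dots> = (\<Sum>(k, ks)\<in>{..<n} \<times> idx n (length w). Poly_Mapping.single (mu (a i k) (W (zip (map fst w) ks)), mu (a k j) (W (zip ks (map snd w)))) 1)"
    by (simp add: sum.cartesian_product)
  also have "\<dots> = (\<Sum>ks'\<in>(\<lambda>(k, ks). k # ks) ` ({..<n} \<times> idx n (length w)). Poly_Mapping.single (W (zip (i # map fst w) ks'), W (zip ks' (j # map snd w))) 1)"
    by (subst sum.reindex) (auto simp: inj_on_def split_def intro!: sum.cong)
  also have "\<dots> = T (ij # w)"
    unfolding T_def using ij by (simp add: idx_Suc)
  finally have 3: "tmult A (\<Sum>k<n. Poly_Mapping.single (a i k, a k j) 1) (T w) = T (ij # w)" .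
  show ?case using teq_trans[OF 1 2] 3 by simp
qed

lemma E_tword': "set I \<subseteq> {..<n} \<Longrightarrow> set J \<subseteq> {..<n} \<Longrightarrow> E (tword I J) = W (zip I J)"
  unfolding tword_def
  by (subst E_single) (auto intro!: wok_zip simp: W_C wok_zip)

lemma E_tword: "I \<in> idx n p \<Longrightarrow> J \<in> idx n q \<Longrightarrow> E (tword I J) = W (zip I J)"
  unfolding idx_def by (simp add: E_tword')

lemma E_DD:
  assumes p: "p \<in> tc_carrier n"
  shows "teq2 A (DD (E p)) (tmap2 E E (tc_comult n p))"
proof -
  have okp: "\<And>w. w \<in> Poly_Mapping.keys p \<Longrightarrow> wok n w" using p by (auto simp: tcC_iff)
  have h: "E (tword (map fst w) ks) = W (zip (map fst w) ks) \<and> E (tword ks (map snd w)) = W (zip ks (map snd w))"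
    if "w \<in> Poly_Mapping.keys p" "ks \<in> idx n (length w)" for w ks
    using okp[OF that(1)] that(2) by (auto simp: idx_def intro!: E_tword' wok_fst wok_snd)
  have eqR: "tmap2 E E (tc_comult n p) = (\<Sum>w\<in>Poly_Mapping.keys p. pm_smult (Poly_Mapping.lookup p w) (T w))"
    unfolding tc_comult_def T_def
    by (simp add: tmap2_sum tmap2_single pm_smult_sum pm_smult_single)
       (intro sum.cong refl; simp add: h)
  have 1: "teq2 A (DD (E p)) (\<Sum>w\<in>Poly_Mapping.keys p. DD (sm (Poly_Mapping.lookup p w) (W w)))"
    unfolding ev_def using okp by (intro DD_vsum) (auto simp: W_C)
  have 2: "teq2 A (\<Sum>w\<in>Poly_Mapping.keys p. DD (sm (Poly_Mapping.lookup p w) (W w))) (\<Sum>w\<in>Poly_Mapping.keys p. pm_smult (Poly_Mapping.lookup p w) (T w))"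
    by (intro teq_sum teq_trans[OF DD_sm teq_sm[OF DD_W]]) (auto simp: okp W_C)
  show ?thesis using teq_trans[OF 1 2] eqR by simp
qed

end

locale BANF = BAN A n a for A :: "('k::field, 'a) bialg" and n a +
  fixes nin mout :: "'i \<Rightarrow> nat" and fm :: "'i \<Rightarrow> nat list \<Rightarrow> nat list \<Rightarrow> 'k"
  assumes colin: "\<forall>i. colinear A n a (nin i) (mout i) (fm i)"
begin

lemma aprod_W: "aprod A a I J = W (zip I J)"
  by (simp add: aprod_def weval_def)

lemma gen_ok:
  assumes I: "I \<in> idx n (nin i)" and K: "K \<in> idx n (mout i)"
  shows "ideal_gen n (nin i) (mout i) (fm i) I K \<in> tc_carrier n \<and> E (ideal_gen n (nin i) (mout i) (fm i) I K) = ze"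
proof -
  define X where "X = (\<Sum>J\<in>idx n (nin i). pm_smult (fm i J K) (tword I J))"
  define Y where "Y = (\<Sum>J\<in>idx n (mout i). pm_smult (fm i I J) (tword J K))"
  have XC: "X \<in> tc_carrier n" unfolding X_def using I by (intro tcC_sum tcC_sm tword_C) auto
  have YC: "Y \<in> tc_carrier n" unfolding Y_def using K by (intro tcC_sum tcC_sm tword_C) auto
  have "E X = vsum A (\<lambda>J. E (pm_smult (fm i J K) (tword I J))) (idx n (nin i))"
    unfolding X_def using I by (intro E_sum tcC_sm tword_C) auto
  also have "\<dots> = vsum A (\<lambda>J. sm (fm i J K) (aprod A a I J)) (idx n (nin i))"
    using I by (intro vsum_cong) (simp add: E_sm tword_C E_tword aprod_W)
  finally have EX: "E X = vsum A (\<lambda>J. sm (fm i J K) (aprod A a I J)) (idx n (nin i))" .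
  have "E Y = vsum A (\<lambda>J. E (pm_smult (fm i I J) (tword J K))) (idx n (mout i))"
    unfolding Y_def using K by (intro E_sum tcC_sm tword_C) auto
  also have "\<dots> = vsum A (\<lambda>J. sm (fm i I J) (aprod A a J K)) (idx n (mout i))"
    using K by (intro vsum_cong) (simp add: E_sm tword_C E_tword aprod_W)
  finally have EY: "E Y = vsum A (\<lambda>J. sm (fm i I J) (aprod A a J K)) (idx n (mout i))" .
  have "E X = E Y" using EX EY colin I K unfolding colinear_def by simp
  moreover have "ideal_gen n (nin i) (mout i) (fm i) I K = X - Y"
    by (simp add: ideal_gen_def X_def Y_def)
  ultimately show ?thesis using XC YC by (simp add: tcC_diff E_diff pl_neg E_C)
qed

lemma ideal_ok:
  assumes "r \<in> tc_ideal n G" "\<And>g. g \<in> G \<Longrightarrow> g \<in> tc_carrier n \<and> E g = ze"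
  shows "r \<in> tc_carrier n \<and> E r = ze"
  using assms(1)
proof (induction r rule: tc_ideal.induct)
  case (gen g) then show ?case using assms(2) by blast
next
  case z then show ?case by simp
next
  case (add u v) then show ?case by (simp add: tcC_add E_add)
next
  case (sm u c) then show ?case by (simp add: tcC_sm E_sm)
next
  case (lmul x u) then show ?case by (simp add: tcC_mul E_mul E_C)
next
  case (rmul x u) then show ?case by (simp add: tcC_mul E_mul E_C)
qed

lemma IF_ok: "r \<in> IF n nin mout fm \<Longrightarrow> r \<in> tc_carrier n \<and> E r = ze"
  unfolding IF_def by (erule ideal_ok) (auto dest: gen_ok)

end



context BANF
begin

abbreviation "RR \<equiv> IF n nin mout fm"
abbreviation "BB \<equiv> AF n nin mout fm"

lemma B_simps:
  "b_carrier BB = {coset RR p | p. p \<in> tc_carrier n}"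
  "b_add BB X Y = coset RR (rep X + rep Y)"
  "b_smult BB c X = coset RR (pm_smult c (rep X))"
  "b_mult BB X Y = coset RR (tc_mul (rep X) (rep Y))"
  "b_one BB = coset RR tc_one"
  "b_comult BB X = tmap2 (coset RR) (coset RR) (tc_comult n (rep X))"
  "b_counit BB X = tc_counit (rep X)"
  by (simp_all add: AF_def Let_def)

lemma R_ok: "r \<in> RR \<Longrightarrow> r \<in> tc_carrier n \<and> E r = ze" by (rule IF_ok)
lemma R_add: "r \<in> RR \<Longrightarrow> r' \<in> RR \<Longrightarrow> r + r' \<in> RR" unfolding IF_def by (rule tc_ideal.add)
lemma R_sm: "r \<in> RR \<Longrightarrow> pm_smult c r \<in> RR" unfolding IF_def by (rule tc_ideal.sm)
lemma R_zero: "0 \<in> RR" unfolding IF_def by (rule tc_ideal.z)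
lemma R_lmul: "x \<in> tc_carrier n \<Longrightarrow> r \<in> RR \<Longrightarrow> tc_mul x r \<in> RR" unfolding IF_def by (rule tc_ideal.lmul)
lemma R_rmul: "x \<in> tc_carrier n \<Longrightarrow> r \<in> RR \<Longrightarrow> tc_mul r x \<in> RR" unfolding IF_def by (rule tc_ideal.rmul)
lemma R_neg: "r \<in> RR \<Longrightarrow> - r \<in> RR" using R_sm[of r "-1"] by (simp add: pm_smult_m1)
lemma R_diff: "r \<in> RR \<Longrightarrow> r' \<in> RR \<Longrightarrow> r - r' \<in> RR" using R_add[OF _ R_neg[of r'], of r] by simp

lemma coset_self: "p \<in> coset RR p"
  unfolding coset_def using R_zero by force

lemma coset_shift:
  assumes r: "r \<in> RR" shows "coset RR (p + r) = coset RR p"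
proof
  show "coset RR (p + r) \<subseteq> coset RR p"
  proof
    fix x assume "x \<in> coset RR (p + r)"
    then obtain r' where "r' \<in> RR" "x = p + r + r'" unfolding coset_def by blast
    then show "x \<in> coset RR p" unfolding coset_def using R_add[OF r \<open>r' \<in> RR\<close>]
      by (metis (mono_tags, lifting) add.assoc mem_Collect_eq)
  qed
next
  show "coset RR p \<subseteq> coset RR (p + r)"
  proof
    fix x assume "x \<in> coset RR p"
    then obtain r' where r': "r' \<in> RR" "x = p + r'" unfolding coset_def by blast
    then have "x = (p + r) + (r' - r)" by simp
    then show "x \<in> coset RR (p + r)" unfolding coset_def using R_diff[OF r'(1) r] by blast
  qed
qed

lemma rep_decomp: "\<exists>r\<in>RR. rep (coset RR p) = p + r"
proof -
  have "rep (coset RR p) \<in> coset RR p" unfolding rep_def using coset_self by (rule someI)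
  then show ?thesis unfolding coset_def by blast
qed

lemma rep_C: "p \<in> tc_carrier n \<Longrightarrow> rep (coset RR p) \<in> tc_carrier n"
  using rep_decomp[of p] R_ok tcC_add by metis

lemma E_rep: "p \<in> tc_carrier n \<Longrightarrow> E (rep (coset RR p)) = E p"
  using rep_decomp[of p] R_ok by (metis E_add E_C pl_ze_r)

lemma coset_add:
  assumes "p \<in> tc_carrier n" "q \<in> tc_carrier n"
  shows "b_add BB (coset RR p) (coset RR q) = coset RR (p + q)"
proof -
  obtain r r' where r: "r \<in> RR" "rep (coset RR p) = p + r" and r': "r' \<in> RR" "rep (coset RR q) = q + r'"
    using rep_decomp by blast
  have "rep (coset RR p) + rep (coset RR q) = (p + q) + (r + r')" using r r' by (simp add: algebra_simps)
  then show ?thesis using coset_shift[OF R_add[OF r(1) r'(1)]] by (simp add: B_simps)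
qed

lemma coset_sm:
  assumes "p \<in> tc_carrier n"
  shows "b_smult BB c (coset RR p) = coset RR (pm_smult c p)"
proof -
  obtain r where r: "r \<in> RR" "rep (coset RR p) = p + r"
    using rep_decomp by blast
  then show ?thesis using coset_shift[OF R_sm[OF r(1)]] by (simp add: B_simps pm_smult_add)
qed

lemma coset_mul:
  assumes p: "p \<in> tc_carrier n" and q: "q \<in> tc_carrier n"
  shows "b_mult BB (coset RR p) (coset RR q) = coset RR (tc_mul p q)"
proof -
  obtain r r' where r: "r \<in> RR" "rep (coset RR p) = p + r" and r': "r' \<in> RR" "rep (coset RR q) = q + r'"
    using rep_decomp by blast
  have rC: "r \<in> tc_carrier n" using R_ok r by blast
  have "tc_mul (rep (coset RR p)) (rep (coset RR q)) = tc_mul p q + (tc_mul r q + tc_mul p r' + tc_mul r r')"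
    using r r' by (simp add: tc_mul_bil bil_add_left bil_add_right algebra_simps)
  moreover have "tc_mul r q + tc_mul p r' + tc_mul r r' \<in> RR"
    using r r' p q rC by (intro R_add R_lmul R_rmul) auto
  ultimately show ?thesis using coset_shift by (simp add: B_simps)
qed

lemma coset_in_B: "p \<in> tc_carrier n \<Longrightarrow> coset RR p \<in> b_carrier BB"
  by (auto simp: B_simps)

lemma B_elem: "X \<in> b_carrier BB \<Longrightarrow> \<exists>p. p \<in> tc_carrier n \<and> X = coset RR p"
  by (auto simp: B_simps)

lemma wok_idx_fst: "wok n w \<Longrightarrow> map fst w \<in> idx n (length w)"
  by (auto simp: idx_def wok_def)
lemma wok_idx_snd: "wok n w \<Longrightarrow> map snd w \<in> idx n (length w)"
  by (auto simp: idx_def wok_def)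

lemma comult_keys:
  assumes p: "p \<in> tc_carrier n" and pr: "pr \<in> Poly_Mapping.keys (tc_comult n p)"
  shows "fst pr \<in> tc_carrier n \<and> snd pr \<in> tc_carrier n"
proof -
  from pr obtain w where w: "w \<in> Poly_Mapping.keys p"
    and pr1: "pr \<in> Poly_Mapping.keys (\<Sum>ks\<in>idx n (length w). Poly_Mapping.single (tword (map fst w) ks, tword ks (map snd w)) (Poly_Mapping.lookup p w))"
    using keys_sum[THEN subsetD, OF pr[unfolded tc_comult_def]] by (elim UN_E) blast
  from pr1 obtain ks where ks: "ks \<in> idx n (length w)"
    and pr2: "pr \<in> Poly_Mapping.keys (Poly_Mapping.single (tword (map fst w) ks, tword ks (map snd w)) (Poly_Mapping.lookup p w))"
    using keys_sum[THEN subsetD, OF pr1] by (elim UN_E) blast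
  have okw: "wok n w" using p w by (simp add: tcC_iff)
  from pr2 have "pr = (tword (map fst w) ks, tword ks (map snd w))" by (simp split: if_splits)
  then show ?thesis using ks okw by (auto intro: tword_C wok_idx_fst wok_idx_snd)
qed

definition piF :: "'k tc set \<Rightarrow> 'a" where "piF X = E (rep X)"

lemma piF_coset: "p \<in> tc_carrier n \<Longrightarrow> piF (coset RR p) = E p"
  by (simp add: piF_def E_rep)

lemma piF_hom: "bialg_hom BB A piF"
  unfolding bialg_hom_def
proof (intro conjI ballI allI)
  fix X assume "X \<in> b_carrier BB"
  then obtain p where p: "p \<in> tc_carrier n" "X = coset RR p" using B_elem by blast
  show "piF X \<in> CC" using p by (simp add: piF_coset E_C)
  show "ee (piF X) = b_counit BB X"
    using p rep_C by (simp add: piF_def B_simps E_counit)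
  show "teq2 A (DD (piF X)) (tmap2 piF piF (b_comult BB X))"
  proof -
    have rC: "rep X \<in> tc_carrier n" using p rep_C by simp
    have "tmap2 piF piF (b_comult BB X) = tmap2 (piF \<circ> coset RR) (piF \<circ> coset RR) (tc_comult n (rep X))"
      by (simp add: B_simps tmap2_comp)
    also have "\<dots> = tmap2 E E (tc_comult n (rep X))"
      by (rule tmap2_cong) (use comult_keys[OF rC] in \<open>auto simp: piF_coset\<close>)
    finally show ?thesis using E_DD[OF rC] by (simp add: piF_def)
  qed
  fix Y assume "Y \<in> b_carrier BB"
  then obtain q where q: "q \<in> tc_carrier n" "Y = coset RR q" using B_elem by blast
  show "piF (b_add BB X Y) = pl (piF X) (piF Y)"
    using p q by (simp add: coset_add piF_coset tcC_add E_add)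
  show "piF (b_mult BB X Y) = mu (piF X) (piF Y)"
    using p q by (simp add: coset_mul piF_coset tcC_mul E_mul)
next
  fix c X assume "X \<in> b_carrier BB"
  then obtain p where p: "p \<in> tc_carrier n" "X = coset RR p" using B_elem by blast
  show "piF (b_smult BB c X) = sm c (piF X)"
    using p by (simp add: coset_sm piF_coset tcC_sm E_sm)
next
  show "piF (b_one BB) = on"
    by (simp add: B_simps piF_coset tc_one_def E_single tcC_single)
qed

lemma tword_single: "tword [i] [j] = Poly_Mapping.single [(i, j)] 1"
  by (simp add: tword_def)

lemma piF_t: "i < n \<Longrightarrow> j < n \<Longrightarrow> piF (AF_t n nin mout fm i j) = a i j"
  unfolding AF_t_def tword_single
  by (subst piF_coset) (auto simp: tcC_single E_single aC)

context
  fixes pi' :: "'k tc set \<Rightarrow> 'a"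
  assumes hom': "bialg_hom BB A pi'"
    and t': "\<forall>i<n. \<forall>j<n. pi' (AF_t n nin mout fm i j) = a i j"
begin

lemma h_C: "X \<in> b_carrier BB \<Longrightarrow> pi' X \<in> CC" using hom' by (simp add: bialg_hom_def)
lemma h_add: "X \<in> b_carrier BB \<Longrightarrow> Y \<in> b_carrier BB \<Longrightarrow> pi' (b_add BB X Y) = pl (pi' X) (pi' Y)"
  using hom' by (simp add: bialg_hom_def)
lemma h_sm: "X \<in> b_carrier BB \<Longrightarrow> pi' (b_smult BB c X) = sm c (pi' X)"
  using hom' by (simp add: bialg_hom_def)
lemma h_mul: "X \<in> b_carrier BB \<Longrightarrow> Y \<in> b_carrier BB \<Longrightarrow> pi' (b_mult BB X Y) = mu (pi' X) (pi' Y)"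
  using hom' by (simp add: bialg_hom_def)
lemma h_one: "pi' (b_one BB) = on"
  using hom' by (simp add: bialg_hom_def)

lemma u_single1: "wok n w \<Longrightarrow> pi' (coset RR (Poly_Mapping.single w 1)) = W w"
proof (induction w)
  case Nil
  then show ?case using h_one by (simp add: B_simps tc_one_def)
next
  case (Cons ij w)
  obtain i j where ij: "ij = (i, j)" by (cases ij)
  have ok: "i < n" "j < n" "wok n w" using Cons.prems ij by auto
  have e: "tc_mul (Poly_Mapping.single [(i, j)] 1) (Poly_Mapping.single w 1) = Poly_Mapping.single (ij # w) 1"
    by (simp add: tc_mul_bil bil_single ij)
  have tC: "Poly_Mapping.single [(i, j)] 1 \<in> tc_carrier n" using ok by (simp add: tcC_single)
  have wC: "Poly_Mapping.single w 1 \<in> tc_carrier n" using ok by (simp add: tcC_single)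
  have e2: "b_mult BB (AF_t n nin mout fm i j) (coset RR (Poly_Mapping.single w 1)) = coset RR (Poly_Mapping.single (ij # w) 1)"
    unfolding AF_t_def tword_single using coset_mul[OF tC wC] unfolding e .
  have "pi' (b_mult BB (AF_t n nin mout fm i j) (coset RR (Poly_Mapping.single w 1))) = mu (a i j) (W w)"
    using ok Cons.IH t' h_mul[OF coset_in_B[OF tC] coset_in_B[OF wC]] unfolding AF_t_def tword_single by simp
  then show ?case unfolding e2 using ij by simp
qed

lemma u_single: "wok n w \<Longrightarrow> pi' (coset RR (Poly_Mapping.single w c)) = sm c (W w)"
proof -
  assume w: "wok n w"
  have "coset RR (Poly_Mapping.single w c) = b_smult BB c (coset RR (Poly_Mapping.single w 1))"
    using w by (simp add: coset_sm tcC_single pm_smult_single)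
  moreover have "pi' (b_smult BB c (coset RR (Poly_Mapping.single w 1))) = sm c (pi' (coset RR (Poly_Mapping.single w 1)))"
    by (rule h_sm[OF coset_in_B[OF tcC_single[OF w]]])
  ultimately show ?thesis using w u_single1 by simp
qed

lemma u_zero: "pi' (coset RR 0) = ze"
proof -
  have e: "b_smult BB 0 (coset RR 0) = coset RR 0" by (simp add: coset_sm)
  have "pi' (b_smult BB 0 (coset RR 0)) = sm 0 (pi' (coset RR 0))"
    using coset_in_B[of 0] by (intro h_sm) simp
  then show ?thesis using h_C[of "coset RR 0"] coset_in_B[of 0] unfolding e by simp
qed

lemma u_sum:
  assumes "finite S" "\<And>w. w \<in> S \<Longrightarrow> wok n w"
  shows "pi' (coset RR (\<Sum>w\<in>S. Poly_Mapping.single w (c w))) = E (\<Sum>w\<in>S. Poly_Mapping.single w (c w))"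
  using assms
proof (induction S rule: finite_induct)
  case empty then show ?case by (simp add: u_zero)
next
  case (insert x F)
  have C: "(\<Sum>w\<in>F. Poly_Mapping.single w (c w)) \<in> tc_carrier n" "Poly_Mapping.single x (c x) \<in> tc_carrier n"
    using insert by (auto intro!: tcC_sum tcC_single)
  have "coset RR (\<Sum>w\<in>insert x F. Poly_Mapping.single w (c w)) = b_add BB (coset RR (Poly_Mapping.single x (c x))) (coset RR (\<Sum>w\<in>F. Poly_Mapping.single w (c w)))"
    using insert C by (simp add: coset_add)
  moreover have "pi' (b_add BB (coset RR (Poly_Mapping.single x (c x))) (coset RR (\<Sum>w\<in>F. Poly_Mapping.single w (c w))))
     = pl (pi' (coset RR (Poly_Mapping.single x (c x)))) (pi' (coset RR (\<Sum>w\<in>F. Poly_Mapping.single w (c w))))"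
    by (rule h_add[OF coset_in_B[OF C(2)] coset_in_B[OF C(1)]])
  ultimately show ?case using insert C by (simp add: u_single E_add E_single)
qed

lemma u_all: "p \<in> tc_carrier n \<Longrightarrow> pi' (coset RR p) = E p"
proof -
  assume p: "p \<in> tc_carrier n"
  have "pi' (coset RR (\<Sum>w\<in>Poly_Mapping.keys p. Poly_Mapping.single w (Poly_Mapping.lookup p w)))
     = E (\<Sum>w\<in>Poly_Mapping.keys p. Poly_Mapping.single w (Poly_Mapping.lookup p w))"
    using p by (intro u_sum) (auto simp: tcC_iff)
  then show ?thesis by (simp only: pm_expand[symmetric])
qed

lemma uniq: "X \<in> b_carrier BB \<Longrightarrow> pi' X = piF X"
  using B_elem u_all piF_coset by metis

end

end

theorem mainTheorem2:
  fixes n :: nat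
    and nin mout :: "'i \<Rightarrow> nat"
    and fm :: "'i \<Rightarrow> nat list \<Rightarrow> nat list \<Rightarrow> 'k::field"
    and A :: "('k, 'a) bialg"
    and a :: "nat \<Rightarrow> nat \<Rightarrow> 'a"
  assumes "is_bialgebra A"
    and "comodule_mat A n a"
    and "\<forall>i. colinear A n a (nin i) (mout i) (fm i)"
  shows "\<exists>\<pi>. bialg_hom (AF n nin mout fm) A \<pi>
            \<and> (\<forall>i<n. \<forall>j<n. \<pi> (AF_t n nin mout fm i j) = a i j)
            \<and> (\<forall>\<pi>'. bialg_hom (AF n nin mout fm) A \<pi>'
                   \<and> (\<forall>i<n. \<forall>j<n. \<pi>' (AF_t n nin mout fm i j) = a i j)
                   \<longrightarrow> (\<forall>X\<in>b_carrier (AF n nin mout fm). \<pi>' X = \<pi> X))"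
proof -
  interpret BANF A n a nin mout fm
    using assms by unfold_locales auto
  have 1: "bialg_hom (AF n nin mout fm) A piF" by (rule piF_hom)
  have 2: "\<forall>i<n. \<forall>j<n. piF (AF_t n nin mout fm i j) = a i j" using piF_t by blast
  have 3: "\<forall>\<pi>'. bialg_hom (AF n nin mout fm) A \<pi>'
                   \<and> (\<forall>i<n. \<forall>j<n. \<pi>' (AF_t n nin mout fm i j) = a i j)
                   \<longrightarrow> (\<forall>X\<in>b_carrier (AF n nin mout fm). \<pi>' X = piF X)"
    using uniq by blast
  show ?thesis using 1 2 3 by blast
qed


end
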